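(* Let $G$ be a finite nilpotent group, $f\in\mathrm{Aut}(G)$, and for each prime $p$ dividing $|G|$ let $S_p$ be the (unique) Sylow $p$-subgroup of $G$. Suppose $Q=\mathcal{Q}(G,f)$ is connected. Then $Q$ is simply connected if and only if $\mathcal{Q}(S_p,f|_{S_p})$ is simply connected for every prime $p$ dividing $|G|$.
   Context: A quandle is a set $Q$ with a binary operation $*$ such that every left translation $L_x:y\mapsto x*y$ is bijective, $x*(y*z)=(x*y)*(x*z)$ and $x*x=x$; $Q$ is connected if $\langle L_x:x\in Q\rangle$ is transitive on $Q$. For a group $G$ and $f\in\mathrm{Aut}(G)$, $\mathcal{Q}(G,f)$ is $G$ with $x*y=xf(x^{-1}y)$ (note $f(S_p)=S_p$). For a set $S$, a quandle cocycle with values in $\mathrm{Sym}_S$ is $\theta:Q\times Q\to\mathrm{Sym}_S$ with $\theta_{x*y,x*z}\theta_{x,z}=\theta_{x,y*z}\theta_{y,z}$ and $\theta_{x,x}=1$; it is cohomologous to the trivial cocycle if there is $\gamma:Q\to\mathrm{Sym}_S$ with $\theta_{x,y}=\gamma_{x*y}\gamma_y^{-1}$ for all $x,y$. $Q$ is simply connected if it is connected and, for every set $S$, every such cocycle is cohomologous to the trivial cocycle. *)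

theory Defs
  imports "HOL-Algebra.Algebra" "HOL-Computational_Algebra.Primes"
begin

definition quandle :: "'a set \<Rightarrow> ('a \<Rightarrow> 'a \<Rightarrow> 'a) \<Rightarrow> bool" where
  "quandle Q op \<longleftrightarrow>
     (\<forall>x\<in>Q. \<forall>y\<in>Q. op x y \<in> Q) \<and>
     (\<forall>x\<in>Q. bij_betw (op x) Q Q) \<and>
     (\<forall>x\<in>Q. \<forall>y\<in>Q. \<forall>z\<in>Q. op x (op y z) = op (op x y) (op x z)) \<and>
     (\<forall>x\<in>Q. op x x = x)"

text \<open>Elements of the group generated by the left translations L_x (as maps, to be
  evaluated on Q): finite words in the L_x and their inverses.\<close>
inductive_set inn_gen :: "'a set \<Rightarrow> ('a \<Rightarrow> 'a \<Rightarrow> 'a) \<Rightarrow> ('a \<Rightarrow> 'a) set"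
  for Q op where
  id_in: "id \<in> inn_gen Q op"
| L_in: "g \<in> inn_gen Q op \<Longrightarrow> x \<in> Q \<Longrightarrow> op x \<circ> g \<in> inn_gen Q op"
| Linv_in: "g \<in> inn_gen Q op \<Longrightarrow> x \<in> Q \<Longrightarrow> inv_into Q (op x) \<circ> g \<in> inn_gen Q op"

definition quandle_connected :: "'a set \<Rightarrow> ('a \<Rightarrow> 'a \<Rightarrow> 'a) \<Rightarrow> bool" where
  "quandle_connected Q op \<longleftrightarrow> quandle Q op \<and>
     (\<forall>y\<in>Q. \<forall>z\<in>Q. \<exists>g\<in>inn_gen Q op. g y = z)"

text \<open>Quandle cocycles with values in Sym_S (permutations of S, compared on S;
  the product in Sym_S is composition of maps).\<close>
definition quandle_cocycle ::
  "'a set \<Rightarrow> ('a \<Rightarrow> 'a \<Rightarrow> 'a) \<Rightarrow> 's set \<Rightarrow> ('a \<Rightarrow> 'a \<Rightarrow> 's \<Rightarrow> 's) \<Rightarrow> bool" where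
  "quandle_cocycle Q op S \<theta> \<longleftrightarrow>
     (\<forall>x\<in>Q. \<forall>y\<in>Q. bij_betw (\<theta> x y) S S) \<and>
     (\<forall>x\<in>Q. \<forall>y\<in>Q. \<forall>z\<in>Q. \<forall>s\<in>S.
        \<theta> (op x y) (op x z) (\<theta> x z s) = \<theta> x (op y z) (\<theta> y z s)) \<and>
     (\<forall>x\<in>Q. \<forall>s\<in>S. \<theta> x x s = s)"

definition cohomologous_trivial ::
  "'a set \<Rightarrow> ('a \<Rightarrow> 'a \<Rightarrow> 'a) \<Rightarrow> 's set \<Rightarrow> ('a \<Rightarrow> 'a \<Rightarrow> 's \<Rightarrow> 's) \<Rightarrow> bool" where
  "cohomologous_trivial Q op S \<theta> \<longleftrightarrow>
     (\<exists>\<gamma>. (\<forall>x\<in>Q. bij_betw (\<gamma> x) S S) \<and>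
          (\<forall>x\<in>Q. \<forall>y\<in>Q. \<forall>s\<in>S. \<theta> x y s = \<gamma> (op x y) (inv_into S (\<gamma> y) s)))"

text \<open>Simple connectedness, with the coefficient sets S ranging over all subsets of the
  type 's (the type is passed explicitly).\<close>
definition simply_connected ::
  "'a set \<Rightarrow> ('a \<Rightarrow> 'a \<Rightarrow> 'a) \<Rightarrow> 's itself \<Rightarrow> bool" where
  "simply_connected Q op (T :: 's itself) \<longleftrightarrow> quandle_connected Q op \<and>
     (\<forall>(S :: 's set) \<theta>. quandle_cocycle Q op S \<theta> \<longrightarrow> cohomologous_trivial Q op S \<theta>)"

definition qop :: "('a, 'b) monoid_scheme \<Rightarrow> ('a \<Rightarrow> 'a) \<Rightarrow> 'a \<Rightarrow> 'a \<Rightarrow> 'a" where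
  "qop G f x y = x \<otimes>\<^bsub>G\<^esub> f (inv\<^bsub>G\<^esub> x \<otimes>\<^bsub>G\<^esub> y)"

fun lower_central :: "('a, 'b) monoid_scheme \<Rightarrow> nat \<Rightarrow> 'a set" where
  "lower_central G 0 = carrier G"
| "lower_central G (Suc n) = generate G
     (\<Union>h\<in>carrier G. \<Union>k\<in>lower_central G n.
        {h \<otimes>\<^bsub>G\<^esub> k \<otimes>\<^bsub>G\<^esub> inv\<^bsub>G\<^esub> h \<otimes>\<^bsub>G\<^esub> inv\<^bsub>G\<^esub> k})"

definition nilpotent_group :: "('a, 'b) monoid_scheme \<Rightarrow> bool" where
  "nilpotent_group G \<longleftrightarrow> group G \<and> (\<exists>n. lower_central G n = {\<one>\<^bsub>G\<^esub>})"

definition sylow_subgroup :: "('a, 'b) monoid_scheme \<Rightarrow> nat \<Rightarrow> 'a set \<Rightarrow> bool" where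
  "sylow_subgroup G p P \<longleftrightarrow> subgroup P G \<and> card P = p ^ multiplicity p (order G)"

end

theory Submission
  imports Defs
begin


lemma (in group) inv_cancel_left1 [simp]:
  "x \<in> carrier G \<Longrightarrow> y \<in> carrier G \<Longrightarrow> inv x \<otimes> (x \<otimes> y) = y"
  by (simp add: m_assoc [symmetric])

lemma (in group) inv_cancel_left2 [simp]:
  "x \<in> carrier G \<Longrightarrow> y \<in> carrier G \<Longrightarrow> x \<otimes> (inv x \<otimes> y) = y"
  by (simp add: m_assoc [symmetric])

lemma (in group) pow_coprime_one:
  assumes "x \<in> carrier G" "x [^] (a::nat) = \<one>" "x [^] (b::nat) = \<one>" "coprime a b"
  shows "x = \<one>"
proof -
  have "ord x dvd a" "ord x dvd b" using assms pow_eq_id by auto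
  then have "ord x dvd 1" using assms(4) by (meson coprime_common_divisor coprime_imp_gcd_eq_1 gcd_greatest)
  then have "x [^] (1::nat) = \<one>" using assms(1) pow_eq_id by blast
  then show ?thesis using assms(1) by simp
qed

lemma (in group) pow_one_plus:
  assumes "x \<in> carrier G" "x [^] (N::nat) = \<one>"
  shows "x [^] (1 + N * v) = x"
proof -
  have a: "x [^] (N * v) = \<one>" using assms by (metis nat_pow_pow nat_pow_one)
  have "x [^] (1 + N * v) = x [^] (1::nat) \<otimes> x [^] (N * v)"
    using assms nat_pow_mult[of x 1 "N * v"] by simp
  then show ?thesis using assms a by simp
qed

lemma (in group) subgroup_pow_card:
  assumes "subgroup H G" "finite H" "x \<in> H"
  shows "x [^] card H = \<one>"
proof -
  interpret K: group "G\<lparr>carrier := H\<rparr>" using assms subgroup_imp_group by blast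
  have "x [^]\<^bsub>G\<lparr>carrier := H\<rparr>\<^esub> order (G\<lparr>carrier := H\<rparr>) = \<one>\<^bsub>G\<lparr>carrier := H\<rparr>\<^esub>"
    using K.pow_order_eq_1 assms by simp
  then show ?thesis by (simp add: order_def nat_pow_consistent [symmetric])
qed

lemma (in group) conj_pow:
  assumes "g \<in> carrier G" "x \<in> carrier G"
  shows "(g \<otimes> x \<otimes> inv g) [^] (n::nat) = g \<otimes> x [^] n \<otimes> inv g"
proof (induct n)
  case 0 then show ?case using assms by simp
next
  case (Suc n)
  have "(g \<otimes> x \<otimes> inv g) [^] Suc n = (g \<otimes> x [^] n \<otimes> inv g) \<otimes> (g \<otimes> x \<otimes> inv g)"
    using Suc by simp
  also have "\<dots> = g \<otimes> (x [^] n \<otimes> (inv g \<otimes> g) \<otimes> x) \<otimes> inv g"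
    using assms by (simp add: m_assoc)
  also have "\<dots> = g \<otimes> x [^] Suc n \<otimes> inv g" using assms by (simp add: m_assoc)
  finally show ?case .
qed

text \<open>Finite: conjugation into H gives conjugation onto H.\<close>
lemma (in group) conj_into_inv:
  assumes "subgroup H G" "finite H" "g \<in> carrier G" "\<forall>h\<in>H. g \<otimes> h \<otimes> inv g \<in> H" "h \<in> H"
  shows "inv g \<otimes> h \<otimes> g \<in> H"
proof -
  have sub: "H \<subseteq> carrier G" using assms subgroup.subset by blast
  let ?c = "\<lambda>h. g \<otimes> h \<otimes> inv g"
  have "inj_on ?c H"
  proof
    fix x y assume "x \<in> H" "y \<in> H" "?c x = ?c y"
    then have "g \<otimes> x \<otimes> inv g \<otimes> g = g \<otimes> y \<otimes> inv g \<otimes> g" by simp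
    then have "g \<otimes> x = g \<otimes> y" using sub assms(3) \<open>x \<in> H\<close> \<open>y \<in> H\<close> by (simp add: m_assoc subsetD)
    then show "x = y" using sub assms(3) \<open>x \<in> H\<close> \<open>y \<in> H\<close> by (simp add: subsetD)
  qed
  then have "card (?c ` H) = card H" by (simp add: card_image)
  moreover have "?c ` H \<subseteq> H" using assms(4) by auto
  ultimately have "?c ` H = H" using assms(2) by (simp add: card_subset_eq)
  then obtain h' where "h' \<in> H" "h = ?c h'" using assms(5) by blast
  then show ?thesis using sub assms(3) by (simp add: m_assoc subsetD)
qed

lemma (in group) subgroup_pow_closed:
  assumes "subgroup H G" "x \<in> H" shows "x [^] (n::nat) \<in> H"
proof (induct n)
  case 0 then show ?case using assms subgroup.one_closed by (metis nat_pow_0)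
next
  case (Suc n)
  have "x [^] n \<otimes> x \<in> H" by (rule subgroup.m_closed[OF assms(1) Suc assms(2)])
  then show ?case by simp
qed

lemma (in group) lc_carrier: "lower_central G i \<subseteq> carrier G"
proof (induct i)
  case 0 then show ?case by simp
next
  case (Suc i)
  have "(\<Union>h\<in>carrier G. \<Union>k\<in>lower_central G i.
        {h \<otimes> k \<otimes> inv h \<otimes> inv k}) \<subseteq> carrier G"
    using Suc by blast
  then show ?case using generate_in_carrier by auto
qed


lemma (in group) nilp_grow:
  assumes "lower_central G n = {\<one>}" "subgroup H G" "H \<noteq> carrier G"
  shows "\<exists>g \<in> carrier G - H. \<forall>h\<in>H. g \<otimes> h \<otimes> inv g \<in> H"
proof -
  define i where "i = (LEAST i. lower_central G i \<subseteq> H)"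
  have ex: "lower_central G n \<subseteq> H" using assms subgroup.one_closed by auto
  have hi: "lower_central G i \<subseteq> H" unfolding i_def using ex by (rule LeastI)
  have Hc: "H \<subseteq> carrier G" using assms subgroup.subset by blast
  have "i \<noteq> 0"
  proof
    assume "i = 0" then have "carrier G \<subseteq> H" using hi by simp
    then show False using Hc assms(3) by blast
  qed
  then obtain j where ij: "i = Suc j" using not0_implies_Suc by blast
  have "\<not> lower_central G j \<subseteq> H" using ij i_def not_less_Least[of j "\<lambda>i. lower_central G i \<subseteq> H"] by auto
  then obtain g where g: "g \<in> lower_central G j" "g \<notin> H" by blast
  have gc: "g \<in> carrier G" using g lc_carrier by blast
  have "\<forall>h\<in>H. g \<otimes> h \<otimes> inv g \<in> H"
  proof
    fix h assume h: "h \<in> H"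
    have hc: "h \<in> carrier G" using h Hc by blast
    have "inv h \<otimes> g \<otimes> inv (inv h) \<otimes> inv g \<in> lower_central G (Suc j)"
      apply (simp only: lower_central.simps)
      apply (rule generate.incl)
      using g(1) hc by blast
    then have "inv h \<otimes> g \<otimes> inv (inv h) \<otimes> inv g \<in> H" using hi unfolding ij by blast
    then have "inv h \<otimes> g \<otimes> h \<otimes> inv g \<in> H" using hc by simp
    then have "h \<otimes> (inv h \<otimes> g \<otimes> h \<otimes> inv g) \<in> H" by (rule subgroup.m_closed[OF assms(2) h])
    then show "g \<otimes> h \<otimes> inv g \<in> H" using hc gc by (simp add: m_assoc)
  qed
  then show ?thesis using g gc by blast
qed

lemma (in group) normal_pow_mem:
  assumes "S \<lhd> G" "finite (carrier G)" "z \<in> carrier G" "z [^] (j::nat) = \<one>"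
    "coprime j (card (rcosets S))"
  shows "z \<in> S"
proof -
  interpret N: normal S G by (rule assms(1))
  interpret Q: group "G Mod S" by (rule N.factorgroup_is_group)
  have hom: "(\<lambda>a. S #> a) \<in> hom G (G Mod S)" by (rule N.r_coset_hom_Mod)
  have zc: "S #> z \<in> carrier (G Mod S)" using assms(3) by (auto simp: FactGroup_def RCOSETS_def)
  define c where "c = card (rcosets S)"
  have oc: "order (G Mod S) = c" by (simp add: order_def FactGroup_def c_def)
  have "(S #> z) [^]\<^bsub>G Mod S\<^esub> c = \<one>\<^bsub>G Mod S\<^esub>" using Q.pow_order_eq_1[OF zc] oc by simp
  moreover have "S #> (z [^] c) = (S #> z) [^]\<^bsub>G Mod S\<^esub> c"
    using hom_nat_pow[OF hom assms(3) is_group Q.is_group] .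
  ultimately have "S #> (z [^] c) = S" by simp
  then have zcS: "z [^] c \<in> S" using rcos_self[of "z [^] c" S] assms(3) N.subgroup_axioms by simp
  have "finite (rcosets S)" using assms(2) by (simp add: RCOSETS_def)
  moreover have "rcosets S \<noteq> {}" using N.subgroup_in_rcosets[OF is_group] by blast
  ultimately have "c \<noteq> 0" by (simp add: c_def)
  then obtain x y where xy: "c * x = j * y + gcd c j" using bezout_nat by blast
  then have "c * x = 1 + j * y" using assms(5) by (simp add: c_def coprime_commute)
  then have "z = z [^] (c * x)" using pow_one_plus[OF assms(3) assms(4)] by simp
  also have "\<dots> = (z [^] c) [^] x" using assms(3) by (simp add: nat_pow_pow)
  finally have zz: "z = (z [^] c) [^] x" .
  have "(z [^] c) [^] x \<in> S" using subgroup_pow_closed[OF N.subgroup_axioms zcS] by blast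
  then show ?thesis by (subst zz)
qed



lemma prime_power_coprime_part:
  fixes p n :: nat
  assumes "Factorial_Ring.prime p" "n \<noteq> 0"
  shows "coprime (p ^ multiplicity p n) (n div p ^ multiplicity p n)"
proof -
  have "\<not> p dvd (n div p ^ multiplicity p n)"
    using multiplicity_decompose[where x=n and p=p] assms not_prime_unit by blast
  then have "coprime p (n div p ^ multiplicity p n)" using assms(1) prime_imp_coprime by blast
  then show ?thesis by simp
qed

lemma (in group) sylow_normal:
  assumes fin: "finite (carrier G)" and nil: "lower_central G n = {\<one>}"
    and p: "Factorial_Ring.prime p" and syl: "sylow_subgroup G p P"
  shows "P \<lhd> G"
proof -
  define k where "k = multiplicity p (order G)"
  have subP: "subgroup P G" and cardP: "card P = p ^ k" using syl by (auto simp: sylow_subgroup_def k_def)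
  have Pc: "P \<subseteq> carrier G" using subP subgroup.subset by blast
  have finP: "finite P" using fin Pc finite_subset by blast
  define N where "N = {g \<in> carrier G. \<forall>h\<in>P. g \<otimes> h \<otimes> inv g \<in> P}"
  have Nsub: "subgroup N G"
  proof (rule subgroupI)
    show "N \<subseteq> carrier G" by (auto simp: N_def)
    show "N \<noteq> {}"
    proof -
      have "\<one> \<in> N" using Pc by (auto simp: N_def subsetD)
      then show ?thesis by blast
    qed
  next
    fix g assume g: "g \<in> N"
    then have gc: "g \<in> carrier G" by (simp add: N_def)
    have "\<forall>h\<in>P. inv g \<otimes> h \<otimes> inv (inv g) \<in> P"
      using conj_into_inv[OF subP finP gc] g by (simp add: N_def gc)
    then show "inv g \<in> N" using gc by (simp add: N_def)
  next
    fix g1 g2 assume g: "g1 \<in> N" "g2 \<in> N"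
    then have gc: "g1 \<in> carrier G" "g2 \<in> carrier G" by (auto simp: N_def)
    have "\<forall>h\<in>P. (g1 \<otimes> g2) \<otimes> h \<otimes> inv (g1 \<otimes> g2) \<in> P"
    proof
      fix h assume h: "h \<in> P"
      then have hc: "h \<in> carrier G" using Pc by blast
      have "g2 \<otimes> h \<otimes> inv g2 \<in> P" using g h by (simp add: N_def)
      then have "g1 \<otimes> (g2 \<otimes> h \<otimes> inv g2) \<otimes> inv g1 \<in> P" using g by (simp add: N_def)
      then show "(g1 \<otimes> g2) \<otimes> h \<otimes> inv (g1 \<otimes> g2) \<in> P"
        using gc hc by (simp add: m_assoc inv_mult_group)
    qed
    then show "g1 \<otimes> g2 \<in> N" using gc by (simp add: N_def)
  qed
  have PN: "P \<subseteq> N"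
    using Pc subP by (auto simp: N_def intro!: subgroup.m_closed[OF subP] subgroup.m_inv_closed[OF subP])
  have "N = carrier G"
  proof (rule ccontr)
    assume "N \<noteq> carrier G"
    then obtain g where g: "g \<in> carrier G - N" "\<forall>x\<in>N. g \<otimes> x \<otimes> inv g \<in> N"
      using nilp_grow[OF nil Nsub] by blast
    have "g \<in> N"
    proof -
      have "\<forall>h\<in>P. g \<otimes> h \<otimes> inv g \<in> P"
      proof
        fix h assume h: "h \<in> P"
        have hc: "h \<in> carrier G" using h Pc by blast
        have gc: "g \<in> carrier G" using g by blast
        define z where "z = g \<otimes> h \<otimes> inv g"
        have zN: "z \<in> N" using g h PN z_def by blast
        interpret K: group "G\<lparr>carrier := N\<rparr>" using subgroup_imp_group[OF Nsub] .
        have PK: "P \<lhd> G\<lparr>carrier := N\<rparr>"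
        proof (subst K.normal_inv_iff, intro conjI ballI)
          show "subgroup P (G\<lparr>carrier := N\<rparr>)" using subgroup_incl[OF subP Nsub PN] .
        next
          fix x h' assume "x \<in> carrier (G\<lparr>carrier := N\<rparr>)" "h' \<in> P"
          then show "x \<otimes>\<^bsub>G\<lparr>carrier := N\<rparr>\<^esub> h' \<otimes>\<^bsub>G\<lparr>carrier := N\<rparr>\<^esub> inv\<^bsub>G\<lparr>carrier := N\<rparr>\<^esub> x \<in> P"
            using Nsub by (simp add: N_def)
        qed
        have "h [^] card P = \<one>" using subgroup_pow_card[OF subP finP h] .
        then have z1: "z [^] (p ^ k) = \<one>" using conj_pow[OF gc hc] cardP gc by (simp add: z_def)
        have finN: "finite N" using fin Nsub subgroup.subset finite_subset by blast
        have l1: "card (rcosets\<^bsub>G\<lparr>carrier := N\<rparr>\<^esub> P) * card P = card N"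
          using K.lagrange[OF subgroup_incl[OF subP Nsub PN]] by (simp add: order_def)
        have l2: "card (rcosets N) * card N = order G" using lagrange[OF Nsub] .
        have og: "order G \<noteq> 0" using fin subgroup.one_closed[OF subP] Pc by (auto simp: order_def card_eq_0_iff)
        define m where "m = order G div p ^ k"
        have om: "order G = p ^ k * m" unfolding m_def k_def using multiplicity_dvd[of p "order G"] by simp
        have cop: "coprime (p ^ k) m" unfolding m_def k_def using prime_power_coprime_part[OF p og] .
        have "card (rcosets\<^bsub>G\<lparr>carrier := N\<rparr>\<^esub> P) * card (rcosets N) * p ^ k = p ^ k * m"
          using l1 l2 om cardP by (metis mult.assoc mult.commute)
        then have "card (rcosets\<^bsub>G\<lparr>carrier := N\<rparr>\<^esub> P) dvd m"
          using p by (metis dvd_triv_left mult.commute mult_cancel_left power_not_zero not_prime_0 mult.assoc)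
        then have cop2: "coprime (p ^ k) (card (rcosets\<^bsub>G\<lparr>carrier := N\<rparr>\<^esub> P))"
          using cop coprime_divisors dvd_refl by blast
        have "z [^]\<^bsub>G\<lparr>carrier := N\<rparr>\<^esub> (p ^ k) = \<one>\<^bsub>G\<lparr>carrier := N\<rparr>\<^esub>"
          using z1 by (simp add: nat_pow_consistent [symmetric])
        then show "g \<otimes> h \<otimes> inv g \<in> P"
          using K.normal_pow_mem[OF PK _ _ _ cop2] finN zN by (simp add: z_def)
      qed
      then show ?thesis using g by (simp add: N_def)
    qed
    then show False using g by blast
  qed
  then have "\<forall>x\<in>carrier G. \<forall>h\<in>P. x \<otimes> h \<otimes> inv x \<in> P" unfolding N_def by blast
  then show ?thesis using subP normal_inv_iff by blast
qed



locale nilp = group G for G (structure) +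
  fixes f :: "'a \<Rightarrow> 'a"
  assumes fin: "finite (carrier G)"
    and nil: "\<exists>n. lower_central G n = {\<one>}"
    and fiso: "f \<in> iso G G"
begin

definition "PF = prime_factors (order G)"
definition "kk q = multiplicity q (order G)"
definition "Syl q = (SOME P. sylow_subgroup G q P)"
definition "mm q = order G div q ^ kk q"
definition "ee q = (SOME e. (\<exists>v. e = 1 + q ^ kk q * v) \<and> mm q dvd e)"

lemma order_pos: "order G \<noteq> 0"
  using fin by (auto simp: order_def card_eq_0_iff)

lemma PF_prime: "q \<in> PF \<Longrightarrow> Factorial_Ring.prime q"
  by (auto simp: PF_def)

lemma om: "order G = q ^ kk q * mm q"
  unfolding mm_def kk_def using multiplicity_dvd[of q "order G"] by simp

lemma cop_mm: "q \<in> PF \<Longrightarrow> coprime (q ^ kk q) (mm q)"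
  unfolding mm_def kk_def using prime_power_coprime_part[OF PF_prime order_pos] .

lemma Syl_sylow: "q \<in> PF \<Longrightarrow> sylow_subgroup G q (Syl q)"
proof -
  assume q: "q \<in> PF"
  have "\<exists>P. subgroup P G \<and> card P = q ^ kk q"
    using sylow_thm[OF PF_prime[OF q] is_group om fin] .
  then have "\<exists>P. sylow_subgroup G q P" by (auto simp: sylow_subgroup_def kk_def)
  then show ?thesis unfolding Syl_def by (rule someI_ex)
qed

lemma Syl_normal: "q \<in> PF \<Longrightarrow> Syl q \<lhd> G"
  using nil sylow_normal[OF fin _ PF_prime Syl_sylow] by blast

lemma Syl_sub: "q \<in> PF \<Longrightarrow> subgroup (Syl q) G"
  using Syl_sylow by (simp add: sylow_subgroup_def)

lemma Syl_card: "q \<in> PF \<Longrightarrow> card (Syl q) = q ^ kk q"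
  using Syl_sylow by (simp add: sylow_subgroup_def kk_def)

lemma Syl_carrier: "q \<in> PF \<Longrightarrow> x \<in> Syl q \<Longrightarrow> x \<in> carrier G"
  by (rule subgroup.mem_carrier[OF Syl_sub])

lemma Syl_fin: "q \<in> PF \<Longrightarrow> finite (Syl q)"
  by (rule finite_subset[OF subgroup.subset[OF Syl_sub] fin])

lemma Syl_pow: "q \<in> PF \<Longrightarrow> s \<in> Syl q \<Longrightarrow> s [^] (q ^ kk q) = \<one>"
  using subgroup_pow_card[OF Syl_sub Syl_fin] Syl_card by simp

lemma pelt_in:
  assumes q: "q \<in> PF" and z: "z \<in> carrier G" "z [^] (q ^ kk q) = \<one>"
  shows "z \<in> Syl q"
proof -
  have "card (rcosets (Syl q)) * q ^ kk q = q ^ kk q * mm q"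
    using lagrange[OF Syl_sub[OF q]] Syl_card[OF q] om[of q] by simp
  moreover have "q ^ kk q \<noteq> 0" using PF_prime[OF q] by (simp add: prime_gt_0_nat)
  ultimately have "card (rcosets (Syl q)) = mm q" by (metis mult.commute mult_cancel_left)
  then show ?thesis using normal_pow_mem[OF Syl_normal[OF q] fin z] cop_mm[OF q] by simp
qed

lemma sylow_unique:
  assumes q: "q \<in> PF" and P: "sylow_subgroup G q P"
  shows "P = Syl q"
proof -
  have sub: "subgroup P G" and c: "card P = q ^ kk q" using P by (auto simp: sylow_subgroup_def kk_def)
  have finP: "finite P" by (rule finite_subset[OF subgroup.subset[OF sub] fin])
  have "P \<subseteq> Syl q"
  proof
    fix x assume x: "x \<in> P"
    have "x [^] card P = \<one>" using subgroup_pow_card[OF sub finP x] .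
    moreover have "x \<in> carrier G" by (rule subgroup.mem_carrier[OF sub x])
    ultimately show "x \<in> Syl q" using pelt_in[OF q] c by simp
  qed
  then show ?thesis using c Syl_card[OF q] card_subset_eq[OF Syl_fin[OF q]] by simp
qed

lemma ee_ex: "q \<in> PF \<Longrightarrow> \<exists>e. (\<exists>v. e = 1 + q ^ kk q * v) \<and> mm q dvd e"
proof -
  assume q: "q \<in> PF"
  have "mm q \<noteq> 0" using order_pos om[of q] by auto
  then obtain x y where "mm q * x = q ^ kk q * y + gcd (mm q) (q ^ kk q)" using bezout_nat by blast
  then have "mm q * x = 1 + q ^ kk q * y" using cop_mm[OF q] by (simp add: coprime_commute)
  then show ?thesis by (metis dvd_triv_left)
qed

lemma ee_props: "q \<in> PF \<Longrightarrow> (\<exists>v. ee q = 1 + q ^ kk q * v) \<and> mm q dvd ee q"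
proof -
  assume q: "q \<in> PF"
  show ?thesis unfolding ee_def using ee_ex[OF q] by (rule someI_ex)
qed

lemma pow_order: "x \<in> carrier G \<Longrightarrow> order G dvd N \<Longrightarrow> x [^] N = \<one>"
proof -
  assume x: "x \<in> carrier G" and d: "order G dvd N"
  then obtain c where "N = order G * c" by blast
  then have "x [^] N = (x [^] order G) [^] c" using x by (simp add: nat_pow_pow)
  then show ?thesis using pow_order_eq_1[OF x] by simp
qed

lemma pow_ee_in: "q \<in> PF \<Longrightarrow> x \<in> carrier G \<Longrightarrow> x [^] ee q \<in> Syl q"
proof -
  assume q: "q \<in> PF" and x: "x \<in> carrier G"
  have "mm q * q ^ kk q dvd ee q * q ^ kk q" using ee_props[OF q] by (simp add: mult_dvd_mono)
  then have "order G dvd ee q * q ^ kk q" using om[of q] by (simp add: mult.commute)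
  then have "(x [^] ee q) [^] (q ^ kk q) = \<one>" using x pow_order by (simp add: nat_pow_pow)
  then show ?thesis using pelt_in[OF q] x by simp
qed

lemma pp_dvd_mm: "q \<in> PF \<Longrightarrow> r \<in> PF \<Longrightarrow> q \<noteq> r \<Longrightarrow> q ^ kk q dvd mm r"
proof -
  assume q: "q \<in> PF" and r: "r \<in> PF" and qr: "q \<noteq> r"
  have "q ^ kk q dvd order G" using om[of q] by simp
  then have "q ^ kk q dvd r ^ kk r * mm r" using om[of r] by simp
  moreover have "coprime (q ^ kk q) (r ^ kk r)"
    using primes_coprime[OF PF_prime[OF q] PF_prime[OF r] qr] by simp
  ultimately show ?thesis using coprime_dvd_mult_right_iff by blast
qed

lemma ee_dvd_other: "q \<in> PF \<Longrightarrow> r \<in> PF \<Longrightarrow> q \<noteq> r \<Longrightarrow> q ^ kk q dvd ee r"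
  using dvd_trans[OF pp_dvd_mm conjunct2[OF ee_props]] by blast

lemma Syl_inter:
  assumes p: "p \<in> PF" and q: "q \<in> PF" and pq: "p \<noteq> q" and z1: "z \<in> Syl p" and z2: "z \<in> Syl q"
  shows "z = \<one>"
proof -
  have "coprime p q" using primes_coprime[OF PF_prime[OF p] PF_prime[OF q] pq] .
  then have "coprime (p ^ kk p) (q ^ kk q)" by simp
  then show ?thesis using pow_coprime_one[OF Syl_carrier[OF p z1] Syl_pow[OF p z1] Syl_pow[OF q z2]] by simp
qed

lemma syl_comm:
  assumes p: "p \<in> PF" and q: "q \<in> PF" and pq: "p \<noteq> q" and a: "a \<in> Syl p" and b: "b \<in> Syl q"
  shows "a \<otimes> b = b \<otimes> a"
proof -
  have ac: "a \<in> carrier G" and bc: "b \<in> carrier G" using a b p q Syl_carrier by auto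
  have "inv a \<in> Syl p" using subgroup.m_inv_closed[OF Syl_sub[OF p] a] .
  then have "b \<otimes> inv a \<otimes> inv b \<in> Syl p"
    using normal.inv_op_closed2[OF Syl_normal[OF p] bc] by blast
  then have c1: "a \<otimes> (b \<otimes> inv a \<otimes> inv b) \<in> Syl p" using subgroup.m_closed[OF Syl_sub[OF p] a] by blast
  have "a \<otimes> b \<otimes> inv a \<in> Syl q"
    using normal.inv_op_closed2[OF Syl_normal[OF q] ac b] .
  then have c2: "a \<otimes> b \<otimes> inv a \<otimes> inv b \<in> Syl q"
    using subgroup.m_closed[OF Syl_sub[OF q] _ subgroup.m_inv_closed[OF Syl_sub[OF q] b]] by blast
  have "a \<otimes> b \<otimes> inv a \<otimes> inv b = \<one>" using Syl_inter[OF p q pq _ c2] c1 ac bc by (simp add: m_assoc)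
  then have "a \<otimes> b \<otimes> inv a \<otimes> inv b \<otimes> b \<otimes> a = b \<otimes> a" using ac bc by simp
  then show ?thesis using ac bc by (simp add: m_assoc)
qed

lemma f_hom: "f \<in> hom G G" using fiso by (simp add: iso_def)

lemma f_carrier: "x \<in> carrier G \<Longrightarrow> f x \<in> carrier G"
  using f_hom by (simp add: hom_def Pi_def)

lemma f_mult: "x \<in> carrier G \<Longrightarrow> y \<in> carrier G \<Longrightarrow> f (x \<otimes> y) = f x \<otimes> f y"
  using f_hom by (simp add: hom_def)

lemma f_bij: "bij_betw f (carrier G) (carrier G)" using fiso by (simp add: iso_def)

lemma f_pow: "x \<in> carrier G \<Longrightarrow> f (x [^] (n::nat)) = f x [^] n"
  using hom_nat_pow[OF f_hom _ is_group is_group] by simp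

lemma f_one: "f \<one> = \<one>"
  using f_hom is_group by (simp add: hom_one)

lemma f_inv: "x \<in> carrier G \<Longrightarrow> f (inv x) = inv (f x)"
proof -
  assume x: "x \<in> carrier G"
  have "f (inv x) \<otimes> f x = \<one>" using f_mult[of "inv x" x] f_one x by simp
  then have "inv (f x) = f (inv x)" using inv_equality f_carrier x by simp
  then show ?thesis by simp
qed

lemma f_Syl: "q \<in> PF \<Longrightarrow> s \<in> Syl q \<Longrightarrow> f s \<in> Syl q"
proof -
  assume q: "q \<in> PF" and s: "s \<in> Syl q"
  have sc: "s \<in> carrier G" using Syl_carrier[OF q s] .
  have "f s [^] (q ^ kk q) = \<one>" using f_pow[OF sc, symmetric] Syl_pow[OF q s] f_one by simp
  then show ?thesis using pelt_in[OF q f_carrier[OF sc]] by simp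
qed

lemma finv_Syl:
  assumes q: "q \<in> PF" and s: "s \<in> Syl q"
  shows "inv_into (carrier G) f s \<in> Syl q"
proof -
  let ?t = "inv_into (carrier G) f s"
  have sc: "s \<in> carrier G" using Syl_carrier[OF q s] .
  have t: "?t \<in> carrier G" "f ?t = s"
    using f_bij sc by (auto simp: bij_betw_def inv_into_into f_inv_into_f)
  have "f (?t [^] (q ^ kk q)) = f \<one>" using f_pow[OF t(1)] t(2) Syl_pow[OF q s] f_one by simp
  then have "?t [^] (q ^ kk q) = \<one>" using f_bij t(1) by (auto simp: bij_betw_def inj_on_def)
  then show ?thesis using pelt_in[OF q t(1)] by simp
qed

end


context nilp begin

primrec BL :: "nat list \<Rightarrow> 'a set" where
  "BL [] = {\<one>}"
| "BL (q # qs) = {a \<otimes> b | a b. a \<in> Syl q \<and> b \<in> BL qs}"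

lemma BL_carrier: "set qs \<subseteq> PF \<Longrightarrow> b \<in> BL qs \<Longrightarrow> b \<in> carrier G"
proof (induct qs arbitrary: b)
  case Nil then show ?case by simp
next
  case (Cons q qs)
  then obtain a b' where "b = a \<otimes> b'" "a \<in> Syl q" "b' \<in> BL qs" by auto
  moreover have "a \<in> carrier G" using Syl_carrier[OF _ \<open>a \<in> Syl q\<close>] Cons.prems by simp
  moreover have "b' \<in> carrier G" using Cons.hyps[OF _ \<open>b' \<in> BL qs\<close>] Cons.prems by simp
  ultimately show ?case by simp
qed

lemma BL_comm:
  "set qs \<subseteq> PF \<Longrightarrow> p \<in> PF \<Longrightarrow> p \<notin> set qs \<Longrightarrow> s \<in> Syl p \<Longrightarrow> b \<in> BL qs \<Longrightarrow> s \<otimes> b = b \<otimes> s"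
proof (induct qs arbitrary: b)
  case Nil then show ?case using Syl_carrier[OF Nil(2) Nil(4)] by simp
next
  case (Cons q qs)
  then obtain a b' where ab: "b = a \<otimes> b'" "a \<in> Syl q" "b' \<in> BL qs" by auto
  have q: "q \<in> PF" using Cons.prems by simp
  have ac: "a \<in> carrier G" using Syl_carrier[OF q ab(2)] .
  have bc: "b' \<in> carrier G" using BL_carrier[OF _ ab(3)] Cons.prems by simp
  have sc: "s \<in> carrier G" using Syl_carrier[OF Cons.prems(2) Cons.prems(4)] .
  have c1: "s \<otimes> a = a \<otimes> s" using syl_comm[OF Cons.prems(2) q _ Cons.prems(4) ab(2)] Cons.prems(3) by auto
  have c2: "s \<otimes> b' = b' \<otimes> s" using Cons.hyps[OF _ Cons.prems(2) _ Cons.prems(4) ab(3)] Cons.prems by simp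
  have "s \<otimes> (a \<otimes> b') = (s \<otimes> a) \<otimes> b'" using sc ac bc by (simp add: m_assoc)
  also have "\<dots> = a \<otimes> (s \<otimes> b')" using c1 sc ac bc by (simp add: m_assoc)
  also have "\<dots> = (a \<otimes> b') \<otimes> s" using c2 sc ac bc by (simp add: m_assoc)
  finally show ?case using ab(1) by simp
qed

lemma BL_pow:
  "set qs \<subseteq> PF \<Longrightarrow> distinct qs \<Longrightarrow> b \<in> BL qs \<Longrightarrow> (\<forall>q\<in>set qs. q ^ kk q dvd M) \<Longrightarrow> b [^] M = \<one>"
proof (induct qs arbitrary: b)
  case Nil then show ?case by simp
next
  case (Cons q qs)
  then obtain a b' where ab: "b = a \<otimes> b'" "a \<in> Syl q" "b' \<in> BL qs" by auto
  have q: "q \<in> PF" using Cons.prems by simp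
  have ac: "a \<in> carrier G" using Syl_carrier[OF q ab(2)] .
  have bc: "b' \<in> carrier G" using BL_carrier[OF _ ab(3)] Cons.prems by simp
  have c: "a \<otimes> b' = b' \<otimes> a" using BL_comm[OF _ q _ ab(2) ab(3)] Cons.prems by simp
  have "a [^] M = \<one>"
  proof -
    obtain c where "M = q ^ kk q * c" using Cons.prems(4) by auto
    then show ?thesis using Syl_pow[OF q ab(2)] ac by (simp add: nat_pow_pow[symmetric])
  qed
  moreover have "b' [^] M = \<one>" using Cons.hyps[OF _ _ ab(3)] Cons.prems by simp
  ultimately show ?case using pow_mult_distrib[OF c ac bc] ab(1) by simp
qed

lemma BL_mult:
  "set qs \<subseteq> PF \<Longrightarrow> distinct qs \<Longrightarrow> b1 \<in> BL qs \<Longrightarrow> b2 \<in> BL qs \<Longrightarrow> b1 \<otimes> b2 \<in> BL qs"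
proof (induct qs arbitrary: b1 b2)
  case Nil then show ?case by simp
next
  case (Cons q qs)
  obtain a1 c1 where 1: "b1 = a1 \<otimes> c1" "a1 \<in> Syl q" "c1 \<in> BL qs" using Cons.prems by auto
  obtain a2 c2 where 2: "b2 = a2 \<otimes> c2" "a2 \<in> Syl q" "c2 \<in> BL qs" using Cons.prems by auto
  have q: "q \<in> PF" using Cons.prems by simp
  have cs: "a1 \<in> carrier G" "a2 \<in> carrier G" using Syl_carrier[OF q] 1 2 by auto
  have ct: "c1 \<in> carrier G" "c2 \<in> carrier G" using BL_carrier 1 2 Cons.prems by auto
  have cm: "c1 \<otimes> a2 = a2 \<otimes> c1" using BL_comm[OF _ q _ 2(2) 1(3)] Cons.prems by simp
  have "b1 \<otimes> b2 = (a1 \<otimes> a2) \<otimes> (c1 \<otimes> c2)"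
  proof -
    have "b1 \<otimes> b2 = a1 \<otimes> (c1 \<otimes> a2) \<otimes> c2" using 1 2 cs ct by (simp add: m_assoc)
    also have "\<dots> = (a1 \<otimes> a2) \<otimes> (c1 \<otimes> c2)" using cm cs ct by (simp add: m_assoc)
    finally show ?thesis .
  qed
  moreover have "a1 \<otimes> a2 \<in> Syl q" using subgroup.m_closed[OF Syl_sub[OF q] 1(2) 2(2)] .
  moreover have "c1 \<otimes> c2 \<in> BL qs" using Cons.hyps[OF _ _ 1(3) 2(3)] Cons.prems by simp
  ultimately show ?case by auto
qed

lemma BL_dec: "set qs \<subseteq> PF \<Longrightarrow> x \<in> carrier G \<Longrightarrow> x [^] sum_list (map ee qs) \<in> BL qs"
proof (induct qs)
  case Nil then show ?case by simp
next
  case (Cons q qs)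
  have "x [^] sum_list (map ee (q # qs)) = x [^] ee q \<otimes> x [^] sum_list (map ee qs)"
    using Cons.prems by (simp add: nat_pow_mult)
  moreover have "x [^] ee q \<in> Syl q" using pow_ee_in Cons.prems by simp
  moreover have "x [^] sum_list (map ee qs) \<in> BL qs" using Cons by simp
  ultimately show ?case by auto
qed

definition "PFL = sorted_list_of_set PF"
definition "EE = sum_list (map ee PFL)"

lemma PF_fin: "finite PF" by (simp add: PF_def)
lemma PFL_set: "set PFL = PF" by (simp add: PFL_def PF_fin)
lemma PFL_dist: "distinct PFL" by (simp add: PFL_def)

lemma sum_ee:
  "set qs \<subseteq> PF \<Longrightarrow> distinct qs \<Longrightarrow> q \<in> PF \<Longrightarrow>
    (q \<in> set qs \<longrightarrow> (\<exists>c. sum_list (map ee qs) = 1 + q ^ kk q * c)) \<and>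
    (q \<notin> set qs \<longrightarrow> q ^ kk q dvd sum_list (map ee qs))"
proof (induct qs)
  case Nil then show ?case by simp
next
  case (Cons r qs)
  have r: "r \<in> PF" using Cons.prems by simp
  show ?case
  proof (cases "q = r")
    case True
    then have nq: "q \<notin> set qs" using Cons.prems by simp
    then have "q ^ kk q dvd sum_list (map ee qs)" using Cons by simp
    then obtain d where d: "sum_list (map ee qs) = q ^ kk q * d" by auto
    obtain v where v: "ee q = 1 + q ^ kk q * v" using ee_props[OF Cons.prems(3)] by auto
    have "sum_list (map ee (r # qs)) = 1 + q ^ kk q * (v + d)" using True d v by (simp add: algebra_simps)
    then have "\<exists>c. sum_list (map ee (r # qs)) = 1 + q ^ kk q * c" by blast
    then show ?thesis using True by simp
  next
    case False
    have e: "q ^ kk q dvd ee r" using ee_dvd_other[OF Cons.prems(3) r False] .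
    show ?thesis
    proof (cases "q \<in> set qs")
      case True
      then obtain c where c: "sum_list (map ee qs) = 1 + q ^ kk q * c" using Cons by auto
      obtain d where d: "ee r = q ^ kk q * d" using e by auto
      have "sum_list (map ee (r # qs)) = 1 + q ^ kk q * (d + c)" using c d by (simp add: algebra_simps)
      then have "\<exists>c. sum_list (map ee (r # qs)) = 1 + q ^ kk q * c" by blast
      then show ?thesis using True by simp
    next
      case f2: False
      then have "q ^ kk q dvd sum_list (map ee qs)" using Cons by simp
      then show ?thesis using e False f2 by simp
    qed
  qed
qed

lemma order_dvd_EE: "order G dvd (EE - 1)"
proof (cases "EE - 1 = 0")
  case True then show ?thesis by simp
next
  case False
  show ?thesis
  proof (rule multiplicity_le_imp_dvd[OF order_pos])
    fix r :: nat assume r: "Factorial_Ring.prime r"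
    show "multiplicity r (order G) \<le> multiplicity r (EE - 1)"
    proof (cases "r \<in> PF")
      case True
      then obtain c where "EE = 1 + r ^ kk r * c"
        using sum_ee[OF _ PFL_dist, of r] PFL_set by (auto simp: EE_def)
      then have "r ^ kk r dvd EE - 1" by simp
      then have "kk r \<le> multiplicity r (EE - 1)"
        using power_dvd_iff_le_multiplicity[where x="EE - 1" and p=r] False r not_prime_unit by blast
      then show ?thesis by (simp add: kk_def)
    next
      case False
      then have "\<not> r dvd order G" using r order_pos by (auto simp: PF_def in_prime_factors_iff)
      then show ?thesis by (simp add: not_dvd_imp_multiplicity_0)
    qed
  qed
qed

lemma pow_EE: "x \<in> carrier G \<Longrightarrow> x [^] EE = x"
proof -
  assume x: "x \<in> carrier G"
  show ?thesis
  proof (cases "EE = 0")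
    case True
    have "PF = {}"
    proof (rule ccontr)
      assume "PF \<noteq> {}" then obtain q where q: "q \<in> PF" by blast
      then obtain c where "EE = 1 + q ^ kk q * c"
        using sum_ee[OF _ PFL_dist, of q] PFL_set by (auto simp: EE_def)
      then show False using True by simp
    qed
    then have "order G = 1" using order_pos prime_factorization_empty_iff[of "order G"]
      by (simp add: PF_def)
    then have "x [^] (1::nat) = \<one>" using pow_order[OF x, of 1] by simp
    then have "x = \<one>" using x by simp
    then show ?thesis using True x by simp
  next
    case False
    obtain c where c: "EE - 1 = order G * c" using order_dvd_EE by blast
    then have "EE = 1 + order G * c" using False by simp
    then show ?thesis using pow_one_plus[OF x pow_order_eq_1[OF x]] by simp
  qed
qed

lemma all_in_BL: "x \<in> carrier G \<Longrightarrow> x \<in> BL PFL"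
  using BL_dec[of PFL x] pow_EE PFL_set by (simp add: EE_def)

end


context nilp begin

definition "prj p x = x [^] ee p"
definition "Brem p = BL (remove1 p PFL)"
definition "Erem p = sum_list (map ee (remove1 p PFL))"

lemma rem_set: "set (remove1 p PFL) = PF - {p}" using PFL_dist PFL_set by simp
lemma rem_sub: "set (remove1 p PFL) \<subseteq> PF" using rem_set by blast
lemma rem_dist: "distinct (remove1 p PFL)" using PFL_dist by simp

lemma EE_split: "p \<in> PF \<Longrightarrow> EE = ee p + Erem p"
  unfolding EE_def Erem_def using sum_list_map_remove1[of p PFL ee] PFL_set by simp

lemma Brem_carrier: "b \<in> Brem p \<Longrightarrow> b \<in> carrier G"
  unfolding Brem_def using BL_carrier[OF rem_sub] .

lemma Brem_comm: "p \<in> PF \<Longrightarrow> s \<in> Syl p \<Longrightarrow> b \<in> Brem p \<Longrightarrow> s \<otimes> b = b \<otimes> s"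
  unfolding Brem_def using BL_comm[OF rem_sub] rem_set by blast

lemma Brem_mult: "b1 \<in> Brem p \<Longrightarrow> b2 \<in> Brem p \<Longrightarrow> b1 \<otimes> b2 \<in> Brem p"
  unfolding Brem_def using BL_mult[OF rem_sub rem_dist] .

lemma pi_carrier: "p \<in> PF \<Longrightarrow> x \<in> carrier G \<Longrightarrow> prj p x \<in> Syl p"
  unfolding prj_def using pow_ee_in .

lemma pi_id: "p \<in> PF \<Longrightarrow> s \<in> Syl p \<Longrightarrow> prj p s = s"
proof -
  assume p: "p \<in> PF" and s: "s \<in> Syl p"
  obtain v where "ee p = 1 + p ^ kk p * v" using ee_props[OF p] by auto
  then show ?thesis unfolding prj_def using pow_one_plus[OF Syl_carrier[OF p s] Syl_pow[OF p s]] by simp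
qed

lemma pi_Brem: "p \<in> PF \<Longrightarrow> b \<in> Brem p \<Longrightarrow> prj p b = \<one>"
  unfolding prj_def Brem_def
  using BL_pow[OF rem_sub rem_dist] rem_set ee_dvd_other by auto

lemma pi_other: "p \<in> PF \<Longrightarrow> q \<in> PF \<Longrightarrow> q \<noteq> p \<Longrightarrow> s \<in> Syl q \<Longrightarrow> prj p s = \<one>"
proof -
  assume p: "p \<in> PF" and q: "q \<in> PF" and qp: "q \<noteq> p" and s: "s \<in> Syl q"
  obtain c where "ee p = q ^ kk q * c" using ee_dvd_other[OF q p qp] by auto
  then show ?thesis unfolding prj_def using Syl_pow[OF q s] Syl_carrier[OF q s]
    by (simp add: nat_pow_pow[symmetric])
qed

lemma decomp:
  assumes p: "p \<in> PF" and x: "x \<in> carrier G"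
  shows "x = prj p x \<otimes> x [^] Erem p" "x [^] Erem p \<in> Brem p"
proof -
  show "x = prj p x \<otimes> x [^] Erem p"
    using pow_EE[OF x] EE_split[OF p] x by (simp add: prj_def nat_pow_mult)
  show "x [^] Erem p \<in> Brem p" unfolding Brem_def Erem_def using BL_dec[OF rem_sub x] .
qed

lemma pi_split: "p \<in> PF \<Longrightarrow> s \<in> Syl p \<Longrightarrow> b \<in> Brem p \<Longrightarrow> prj p (s \<otimes> b) = s"
proof -
  assume p: "p \<in> PF" and s: "s \<in> Syl p" and b: "b \<in> Brem p"
  have sc: "s \<in> carrier G" using Syl_carrier[OF p s] .
  have bc: "b \<in> carrier G" using Brem_carrier[OF b] .
  have "prj p (s \<otimes> b) = prj p s \<otimes> prj p b"
    unfolding prj_def using pow_mult_distrib[OF Brem_comm[OF p s b] sc bc] .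
  then show ?thesis using pi_id[OF p s] pi_Brem[OF p b] sc by simp
qed

lemma pi_mult:
  assumes p: "p \<in> PF" and x: "x \<in> carrier G" and y: "y \<in> carrier G"
  shows "prj p (x \<otimes> y) = prj p x \<otimes> prj p y"
proof -
  let ?a = "prj p x" and ?b = "x [^] Erem p" and ?c = "prj p y" and ?d = "y [^] Erem p"
  have a: "?a \<in> Syl p" and c: "?c \<in> Syl p" using pi_carrier p x y by auto
  have b: "?b \<in> Brem p" and d: "?d \<in> Brem p" using decomp p x y by auto
  have ac: "?a \<in> carrier G" "?c \<in> carrier G" using a c Syl_carrier[OF p] by auto
  have bc: "?b \<in> carrier G" "?d \<in> carrier G" using b d Brem_carrier by auto
  have "x \<otimes> y = ?a \<otimes> (?b \<otimes> ?c) \<otimes> ?d"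
    using decomp(1)[OF p x] decomp(1)[OF p y] ac bc by (metis m_assoc m_closed)
  also have "?b \<otimes> ?c = ?c \<otimes> ?b" using Brem_comm[OF p c b] by simp
  also have "?a \<otimes> (?c \<otimes> ?b) \<otimes> ?d = (?a \<otimes> ?c) \<otimes> (?b \<otimes> ?d)" using ac bc by (simp add: m_assoc)
  finally have "x \<otimes> y = (?a \<otimes> ?c) \<otimes> (?b \<otimes> ?d)" .
  moreover have "?a \<otimes> ?c \<in> Syl p" using subgroup.m_closed[OF Syl_sub[OF p] a c] .
  moreover have "?b \<otimes> ?d \<in> Brem p" using Brem_mult[OF b d] .
  ultimately show ?thesis using pi_split[OF p] by simp
qed

lemma pi_f: "x \<in> carrier G \<Longrightarrow> prj p (f x) = f (prj p x)"
  unfolding prj_def using f_pow by simp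

lemma pi_inv: "p \<in> PF \<Longrightarrow> x \<in> carrier G \<Longrightarrow> prj p (inv x) = inv (prj p x)"
  unfolding prj_def using nat_pow_inv by simp

lemma pi_shift:
  assumes p: "p \<in> PF" and x: "x \<in> carrier G"
  shows "\<exists>h\<in>Brem p. h \<otimes> x = prj p x"
proof -
  let ?h = "(inv x) [^] Erem p"
  have h: "?h \<in> Brem p" using decomp(2)[OF p] x by simp
  have e: "?h = inv (x [^] Erem p)" using nat_pow_inv[OF x] .
  have "?h \<otimes> x = inv (x [^] Erem p) \<otimes> (x [^] Erem p \<otimes> prj p x)"
    using decomp(1)[OF p x] e x nat_pow_comm[OF x] by (metis prj_def)
  also have "\<dots> = prj p x" using x by (simp add: prj_def m_assoc[symmetric])
  finally show ?thesis using h by blast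
qed

end


context nilp begin

abbreviation "qo \<equiv> qop G f"
definition "finv = inv_into (carrier G) f"

lemma finv_carrier: "x \<in> carrier G \<Longrightarrow> finv x \<in> carrier G"
  unfolding finv_def using f_bij by (metis bij_betw_def inv_into_into)

lemma f_finv: "x \<in> carrier G \<Longrightarrow> f (finv x) = x"
  unfolding finv_def using f_bij by (simp add: bij_betw_def f_inv_into_f)

lemma finv_f: "x \<in> carrier G \<Longrightarrow> finv (f x) = x"
  unfolding finv_def using f_bij by (simp add: bij_betw_def inv_into_f_f)

lemma f_inj: "x \<in> carrier G \<Longrightarrow> y \<in> carrier G \<Longrightarrow> f x = f y \<Longrightarrow> x = y"
  using f_bij by (auto simp: bij_betw_def inj_on_def)

lemma finv_mult: "x \<in> carrier G \<Longrightarrow> y \<in> carrier G \<Longrightarrow> finv (x \<otimes> y) = finv x \<otimes> finv y"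
  by (rule f_inj) (simp_all add: f_finv finv_carrier f_mult)

lemma finv_one: "finv \<one> = \<one>"
  using finv_f[of \<one>] f_one by simp

lemma finv_Syl': "q \<in> PF \<Longrightarrow> s \<in> Syl q \<Longrightarrow> finv s \<in> Syl q"
  unfolding finv_def by (rule finv_Syl)

lemma qo_def': "qo x y = x \<otimes> f (inv x \<otimes> y)" by (simp add: qop_def)

lemma qo_carrier: "x \<in> carrier G \<Longrightarrow> y \<in> carrier G \<Longrightarrow> qo x y \<in> carrier G"
  by (simp add: qop_def f_carrier)

definition "Li x z = x \<otimes> finv (inv x \<otimes> z)"

lemma Li_carrier: "x \<in> carrier G \<Longrightarrow> z \<in> carrier G \<Longrightarrow> Li x z \<in> carrier G"
  by (simp add: Li_def finv_carrier)

lemma qo_Li: "x \<in> carrier G \<Longrightarrow> z \<in> carrier G \<Longrightarrow> qo x (Li x z) = z"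
  by (simp add: qop_def Li_def finv_carrier f_finv)

lemma Li_qo: "x \<in> carrier G \<Longrightarrow> z \<in> carrier G \<Longrightarrow> Li x (qo x z) = z"
  by (simp add: qop_def Li_def finv_f f_carrier)

lemma qo_inj: "x \<in> carrier G \<Longrightarrow> y \<in> carrier G \<Longrightarrow> y' \<in> carrier G \<Longrightarrow> qo x y = qo x y' \<Longrightarrow> y = y'"
  by (metis Li_qo)

lemma qo_idem: "x \<in> carrier G \<Longrightarrow> qo x x = x"
  by (simp add: qop_def f_one)

lemma qo_one: "y \<in> carrier G \<Longrightarrow> qo \<one> y = f y"
  by (simp add: qop_def f_carrier)

lemma Li_one: "y \<in> carrier G \<Longrightarrow> Li \<one> y = finv y"
  by (simp add: Li_def finv_carrier)

lemma qo_dist: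
  assumes x: "x \<in> carrier G" and y: "y \<in> carrier G" and z: "z \<in> carrier G"
  shows "qo x (qo y z) = qo (qo x y) (qo x z)"
proof -
  have "qo x (qo y z) = x \<otimes> f (inv x \<otimes> y) \<otimes> f (f (inv y \<otimes> z))"
    using x y z by (simp add: qop_def f_mult f_carrier m_assoc)
  moreover have "qo (qo x y) (qo x z) = x \<otimes> f (inv x \<otimes> y) \<otimes> f (f (inv y \<otimes> x) \<otimes> f (inv x \<otimes> z))"
  proof -
    have "inv (x \<otimes> f (inv x \<otimes> y)) \<otimes> (x \<otimes> f (inv x \<otimes> z)) = inv (f (inv x \<otimes> y)) \<otimes> f (inv x \<otimes> z)"
      using x y z by (simp add: inv_mult_group f_carrier m_assoc)
    also have "inv (f (inv x \<otimes> y)) = f (inv y \<otimes> x)"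
      using x y by (simp add: f_inv[symmetric] inv_mult_group)
    finally show ?thesis using x y z by (simp add: qop_def)
  qed
  moreover have "f (inv y \<otimes> x) \<otimes> f (inv x \<otimes> z) = f (inv y \<otimes> z)"
    using x y z by (simp add: f_mult[symmetric] m_assoc)
  ultimately show ?thesis by simp
qed

lemma qo_Li_tr:
  assumes x: "x \<in> carrier G" and y: "y \<in> carrier G" and z: "z \<in> carrier G"
  shows "qo x (Li y z) = (x \<otimes> f (inv x \<otimes> y) \<otimes> inv y) \<otimes> z"
proof -
  have "qo x (Li y z) = x \<otimes> f (inv x \<otimes> y) \<otimes> f (finv (inv y \<otimes> z))"
    using x y z by (simp add: qop_def Li_def f_mult finv_carrier f_carrier m_assoc)
  also have "\<dots> = (x \<otimes> f (inv x \<otimes> y) \<otimes> inv y) \<otimes> z"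
    using x y z by (simp add: f_finv m_assoc f_carrier)
  finally show ?thesis .
qed

lemma prj_cc: "p \<in> PF \<Longrightarrow> x \<in> carrier G \<Longrightarrow> prj p x \<in> carrier G"
  using pi_carrier Syl_carrier by blast

lemma prj_qo: "p \<in> PF \<Longrightarrow> x \<in> carrier G \<Longrightarrow> y \<in> carrier G \<Longrightarrow> prj p (qo x y) = qo (prj p x) (prj p y)"
  by (simp add: qop_def pi_mult pi_inv pi_f prj_cc inv_closed f_carrier)

lemma quandle_sub:
  assumes H: "subgroup H G" and fH: "\<forall>s\<in>H. f s \<in> H" and fiH: "\<forall>s\<in>H. finv s \<in> H"
  shows "quandle H qo"
proof -
  have Hc: "\<And>x. x \<in> H \<Longrightarrow> x \<in> carrier G" using subgroup.mem_carrier[OF H] .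
  have cl: "\<And>x y. x \<in> H \<Longrightarrow> y \<in> H \<Longrightarrow> qo x y \<in> H"
    unfolding qop_def using fH subgroup.m_closed[OF H] subgroup.m_inv_closed[OF H] by blast
  have bij: "\<And>x. x \<in> H \<Longrightarrow> bij_betw (qo x) H H"
  proof -
    fix x assume x: "x \<in> H"
    show "bij_betw (qo x) H H"
    proof (rule bij_betw_imageI)
      show "inj_on (qo x) H" using qo_inj Hc x by (meson inj_onI)
      show "qo x ` H = H"
      proof
        show "qo x ` H \<subseteq> H" using cl x by blast
        show "H \<subseteq> qo x ` H"
        proof
          fix z assume z: "z \<in> H"
          have "Li x z \<in> H" unfolding Li_def
            using fiH subgroup.m_closed[OF H] subgroup.m_inv_closed[OF H] x z by blast
          moreover have "qo x (Li x z) = z" using qo_Li Hc x z by blast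
          ultimately show "z \<in> qo x ` H" by force
        qed
      qed
    qed
  qed
  show ?thesis unfolding quandle_def using cl bij qo_dist qo_idem Hc by blast
qed

lemma Syl_fcl: "q \<in> PF \<Longrightarrow> \<forall>s\<in>Syl q. f s \<in> Syl q" using f_Syl by blast
lemma Syl_ficl: "q \<in> PF \<Longrightarrow> \<forall>s\<in>Syl q. finv s \<in> Syl q" using finv_Syl' by blast

lemma quandle_G: "quandle (carrier G) qo"
  using quandle_sub[OF subgroup_self] f_carrier finv_carrier by blast

lemma quandle_Syl: "q \<in> PF \<Longrightarrow> quandle (Syl q) qo"
  using quandle_sub[OF Syl_sub Syl_fcl Syl_ficl] .

end


locale cocyc = nilp G f for G (structure) and f +
  fixes S :: "'s set" and th :: "'a \<Rightarrow> 'a \<Rightarrow> 's \<Rightarrow> 's" and s0 :: 's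
  assumes coc: "quandle_cocycle (carrier G) (qop G f) S th" and s0: "s0 \<in> S"

sublocale cocyc \<subseteq> B: group "BijGroup (carrier G \<times> S)"
  by (rule group_BijGroup)

context cocyc begin

abbreviation "E \<equiv> carrier G \<times> S"
abbreviation "BG \<equiv> BijGroup E"

lemma th_bij: "x \<in> carrier G \<Longrightarrow> y \<in> carrier G \<Longrightarrow> bij_betw (th x y) S S"
  using coc by (simp add: quandle_cocycle_def)

lemma th_coc: "x \<in> carrier G \<Longrightarrow> y \<in> carrier G \<Longrightarrow> z \<in> carrier G \<Longrightarrow> s \<in> S \<Longrightarrow>
   th (qo x y) (qo x z) (th x z s) = th x (qo y z) (th y z s)"
  using coc by (simp add: quandle_cocycle_def)

lemma th_id: "x \<in> carrier G \<Longrightarrow> s \<in> S \<Longrightarrow> th x x s = s"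
  using coc by (simp add: quandle_cocycle_def)

lemma th_in: "x \<in> carrier G \<Longrightarrow> y \<in> carrier G \<Longrightarrow> s \<in> S \<Longrightarrow> th x y s \<in> S"
  using th_bij bij_betwE by blast

definition "thi x y s = inv_into S (th x y) s"

lemma thi_in: "x \<in> carrier G \<Longrightarrow> y \<in> carrier G \<Longrightarrow> s \<in> S \<Longrightarrow> thi x y s \<in> S"
  unfolding thi_def using th_bij by (metis bij_betw_def inv_into_into)

lemma th_thi: "x \<in> carrier G \<Longrightarrow> y \<in> carrier G \<Longrightarrow> s \<in> S \<Longrightarrow> th x y (thi x y s) = s"
  unfolding thi_def using th_bij by (simp add: bij_betw_def f_inv_into_f)

lemma BG_carrier: "carrier BG = Bij E" by (simp add: BijGroup_def)

lemma BG_mult_app: "\<phi> \<in> Bij E \<Longrightarrow> \<psi> \<in> Bij E \<Longrightarrow> e \<in> E \<Longrightarrow> (\<phi> \<otimes>\<^bsub>BG\<^esub> \<psi>) e = \<phi> (\<psi> e)"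
  by (simp add: BijGroup_def compose_def)

lemma BG_one_app: "e \<in> E \<Longrightarrow> (\<one>\<^bsub>BG\<^esub>) e = e"
  by (simp add: BijGroup_def)

lemma Bij_E: "\<phi> \<in> Bij E \<Longrightarrow> e \<in> E \<Longrightarrow> \<phi> e \<in> E"
  using Bij_imp_funcset by blast

lemma BG_inv_app:
  assumes "\<phi> \<in> Bij E" "e \<in> E" "\<phi> e = e'"
  shows "(inv\<^bsub>BG\<^esub> \<phi>) e' = e"
proof -
  have "e' \<in> E" using Bij_E assms by blast
  moreover have "inv_into E \<phi> (\<phi> e) = e" using assms(1,2) by (simp add: Bij_def bij_betw_def inv_into_f_f)
  ultimately show ?thesis using assms by (simp add: inv_BijGroup)
qed

lemma BG_ext: "\<phi> \<in> Bij E \<Longrightarrow> \<psi> \<in> Bij E \<Longrightarrow> (\<And>e. e \<in> E \<Longrightarrow> \<phi> e = \<psi> e) \<Longrightarrow> \<phi> = \<psi>"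
  by (metis Bij_imp_extensional extensionalityI)

definition "Lam x = (\<lambda>e \<in> E. (qo x (fst e), th x (fst e) (snd e)))"

lemma Lam_app: "y \<in> carrier G \<Longrightarrow> t \<in> S \<Longrightarrow> Lam x (y, t) = (qo x y, th x y t)"
  by (simp add: Lam_def)

lemma Lam_Bij: "x \<in> carrier G \<Longrightarrow> Lam x \<in> Bij E"
proof -
  assume x: "x \<in> carrier G"
  have "bij_betw (Lam x) E E"
  proof (rule bij_betw_imageI)
    show "inj_on (Lam x) E"
    proof (rule inj_onI)
      fix a b assume a: "a \<in> E" and b: "b \<in> E" and e: "Lam x a = Lam x b"
      obtain y t where a': "a = (y, t)" "y \<in> carrier G" "t \<in> S" using a by auto
      obtain y' t' where b': "b = (y', t')" "y' \<in> carrier G" "t' \<in> S" using b by auto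
      have "qo x y = qo x y'" "th x y t = th x y' t'" using e a' b' Lam_app by auto
      then have "y = y'" using qo_inj x a' b' by blast
      then have "t = t'" using \<open>th x y t = th x y' t'\<close> th_bij[OF x a'(2)] a' b'
        by (auto simp: bij_betw_def inj_on_def)
      then show "a = b" using a' b' \<open>y = y'\<close> by simp
    qed
    show "Lam x ` E = E"
    proof
      show "Lam x ` E \<subseteq> E" using x by (auto simp: Lam_def qo_carrier th_in)
      show "E \<subseteq> Lam x ` E"
      proof
        fix e assume e: "e \<in> E"
        obtain y t where e': "e = (y, t)" "y \<in> carrier G" "t \<in> S" using e by auto
        let ?a = "(Li x y, thi x (Li x y) t)"
        have "?a \<in> E" using x e' by (simp add: Li_carrier thi_in)
        moreover have "Lam x ?a = e"
          using x e' by (simp add: Lam_app Li_carrier thi_in qo_Li th_thi)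
        ultimately show "e \<in> Lam x ` E" by force
      qed
    qed
  qed
  then show ?thesis by (simp add: Bij_def Lam_def)
qed

lemma Lam_carrier: "x \<in> carrier G \<Longrightarrow> Lam x \<in> carrier BG"
  using Lam_Bij BG_carrier by simp

lemma Laminv_app:
  "x \<in> carrier G \<Longrightarrow> y \<in> carrier G \<Longrightarrow> t \<in> S \<Longrightarrow>
     (inv\<^bsub>BG\<^esub> (Lam x)) (y, t) = (Li x y, thi x (Li x y) t)"
  by (rule BG_inv_app[OF Lam_Bij]) (simp_all add: Li_carrier thi_in Lam_app qo_Li th_thi)

lemma Lam_comm:
  assumes x: "x \<in> carrier G" and y: "y \<in> carrier G"
  shows "Lam x \<otimes>\<^bsub>BG\<^esub> Lam y = Lam (qo x y) \<otimes>\<^bsub>BG\<^esub> Lam x"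
proof (rule BG_ext)
  show "Lam x \<otimes>\<^bsub>BG\<^esub> Lam y \<in> Bij E" using Lam_carrier x y BG_carrier by (metis B.m_closed)
  show "Lam (qo x y) \<otimes>\<^bsub>BG\<^esub> Lam x \<in> Bij E" using Lam_carrier x y qo_carrier BG_carrier by (metis B.m_closed)
  fix e assume e: "e \<in> E"
  obtain z t where e': "e = (z, t)" "z \<in> carrier G" "t \<in> S" using e by auto
  have l: "(Lam x \<otimes>\<^bsub>BG\<^esub> Lam y) e = (qo x (qo y z), th x (qo y z) (th y z t))"
    using x y e' by (simp add: BG_mult_app Lam_Bij qo_carrier Lam_app th_in)
  have r: "(Lam (qo x y) \<otimes>\<^bsub>BG\<^esub> Lam x) e = (qo (qo x y) (qo x z), th (qo x y) (qo x z) (th x z t))"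
    using x y e' by (simp add: BG_mult_app Lam_Bij qo_carrier Lam_app th_in)
  show "(Lam x \<otimes>\<^bsub>BG\<^esub> Lam y) e = (Lam (qo x y) \<otimes>\<^bsub>BG\<^esub> Lam x) e"
    unfolding l r using qo_dist[OF x y e'(2)] th_coc[OF x y e'(2) e'(3)] by simp
qed

end


lemma (in group) comm_inv:
  assumes "a \<in> carrier G" "x \<in> carrier G" "a \<otimes> x = x \<otimes> a"
  shows "a \<otimes> inv x = inv x \<otimes> a"
proof -
  have "inv x \<otimes> (a \<otimes> x) \<otimes> inv x = inv x \<otimes> (x \<otimes> a) \<otimes> inv x" by (simp only: assms(3))
  moreover have "inv x \<otimes> (a \<otimes> x) \<otimes> inv x = inv x \<otimes> a" using assms(1,2) by (simp add: m_assoc)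
  moreover have "inv x \<otimes> (x \<otimes> a) \<otimes> inv x = a \<otimes> inv x" using assms(1,2) by (simp add: m_assoc[symmetric])
  ultimately show ?thesis by simp
qed

lemma (in group) comm_generate:
  assumes a: "a \<in> carrier G" and XX: "XX \<subseteq> carrier G" and c: "\<forall>x\<in>XX. a \<otimes> x = x \<otimes> a"
    and g: "g \<in> generate G XX"
  shows "a \<otimes> g = g \<otimes> a"
  using g
proof (induct g rule: generate.induct)
  case one then show ?case using a by simp
next
  case (incl h) then show ?case using c by blast
next
  case (inv h) then show ?case using comm_inv[OF a] c XX by blast
next
  case (eng h1 h2)
  have h: "h1 \<in> carrier G" "h2 \<in> carrier G" using eng generate_in_carrier[OF XX] by auto
  have "a \<otimes> (h1 \<otimes> h2) = (a \<otimes> h1) \<otimes> h2" using a h by (simp add: m_assoc)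
  also have "\<dots> = h1 \<otimes> (a \<otimes> h2)" using eng a h by (simp add: m_assoc)
  also have "\<dots> = (h1 \<otimes> h2) \<otimes> a" using eng a h by (simp add: m_assoc)
  finally show ?case .
qed

context cocyc begin

definition "base \<phi> y = fst (\<phi> (y, s0))"

definition "good \<phi> \<longleftrightarrow> \<phi> \<in> Bij E \<and> (\<forall>y\<in>carrier G. \<forall>t\<in>S. fst (\<phi> (y, t)) = base \<phi> y) \<and>
   (\<forall>y\<in>carrier G. \<phi> \<otimes>\<^bsub>BG\<^esub> Lam y = Lam (base \<phi> y) \<otimes>\<^bsub>BG\<^esub> \<phi>)"

lemma base_carrier: "\<phi> \<in> Bij E \<Longrightarrow> y \<in> carrier G \<Longrightarrow> base \<phi> y \<in> carrier G"
  unfolding base_def using Bij_E[of \<phi> "(y, s0)"] s0 by auto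

lemma good_Bij: "good \<phi> \<Longrightarrow> \<phi> \<in> Bij E" by (simp add: good_def)
lemma good_carrier: "good \<phi> \<Longrightarrow> \<phi> \<in> carrier BG" by (simp add: good_def BG_carrier)

lemma good_app:
  assumes "good \<phi>" "y \<in> carrier G" "t \<in> S"
  shows "\<phi> (y, t) = (base \<phi> y, snd (\<phi> (y, t)))" "snd (\<phi> (y, t)) \<in> S"
proof -
  show "\<phi> (y, t) = (base \<phi> y, snd (\<phi> (y, t)))" using assms by (simp add: good_def prod_eq_iff)
  show "snd (\<phi> (y, t)) \<in> S" using Bij_E[OF good_Bij[OF assms(1)], of "(y,t)"] assms by auto
qed

lemma good_comm: "good \<phi> \<Longrightarrow> y \<in> carrier G \<Longrightarrow> \<phi> \<otimes>\<^bsub>BG\<^esub> Lam y = Lam (base \<phi> y) \<otimes>\<^bsub>BG\<^esub> \<phi>"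
  by (simp add: good_def)

lemma base_one: "y \<in> carrier G \<Longrightarrow> base \<one>\<^bsub>BG\<^esub> y = y"
  unfolding base_def using s0 BG_one_app by simp

lemma good_one: "good \<one>\<^bsub>BG\<^esub>"
  unfolding good_def using B.one_closed BG_carrier base_one BG_one_app Lam_carrier qo_carrier by simp

lemma base_Lam: "x \<in> carrier G \<Longrightarrow> y \<in> carrier G \<Longrightarrow> base (Lam x) y = qo x y"
  unfolding base_def using s0 by (simp add: Lam_app)

lemma good_Lam: "x \<in> carrier G \<Longrightarrow> good (Lam x)"
  unfolding good_def using Lam_Bij base_Lam Lam_app Lam_comm by simp

lemma base_Laminv: "x \<in> carrier G \<Longrightarrow> y \<in> carrier G \<Longrightarrow> base (inv\<^bsub>BG\<^esub> (Lam x)) y = Li x y"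
  unfolding base_def using s0 by (simp add: Laminv_app)

lemma good_Laminv:
  assumes x: "x \<in> carrier G" shows "good (inv\<^bsub>BG\<^esub> (Lam x))"
proof -
  have L: "Lam x \<in> carrier BG" using Lam_carrier x .
  have "\<forall>y\<in>carrier G. inv\<^bsub>BG\<^esub> (Lam x) \<otimes>\<^bsub>BG\<^esub> Lam y = Lam (Li x y) \<otimes>\<^bsub>BG\<^esub> inv\<^bsub>BG\<^esub> (Lam x)"
  proof
    fix y assume y: "y \<in> carrier G"
    have Ly: "Lam y \<in> carrier BG" "Lam (Li x y) \<in> carrier BG" using Lam_carrier y x Li_carrier by auto
    have e: "Lam x \<otimes>\<^bsub>BG\<^esub> Lam (Li x y) = Lam y \<otimes>\<^bsub>BG\<^esub> Lam x"
      using Lam_comm[OF x Li_carrier[OF x y]] qo_Li[OF x y] by simp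
    have "inv\<^bsub>BG\<^esub> (Lam x) \<otimes>\<^bsub>BG\<^esub> (Lam x \<otimes>\<^bsub>BG\<^esub> Lam (Li x y)) \<otimes>\<^bsub>BG\<^esub> inv\<^bsub>BG\<^esub> (Lam x)
        = inv\<^bsub>BG\<^esub> (Lam x) \<otimes>\<^bsub>BG\<^esub> (Lam y \<otimes>\<^bsub>BG\<^esub> Lam x) \<otimes>\<^bsub>BG\<^esub> inv\<^bsub>BG\<^esub> (Lam x)"
      using e by simp
    then show "inv\<^bsub>BG\<^esub> (Lam x) \<otimes>\<^bsub>BG\<^esub> Lam y = Lam (Li x y) \<otimes>\<^bsub>BG\<^esub> inv\<^bsub>BG\<^esub> (Lam x)"
      using L Ly by (simp add: B.m_assoc)
  qed
  moreover have "inv\<^bsub>BG\<^esub> (Lam x) \<in> Bij E" using L BG_carrier by (metis B.inv_closed)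
  ultimately show ?thesis unfolding good_def using x base_Laminv Laminv_app by simp
qed

lemma good_mult:
  assumes g1: "good \<phi>" and g2: "good \<psi>"
  shows "good (\<phi> \<otimes>\<^bsub>BG\<^esub> \<psi>)" "\<And>y. y \<in> carrier G \<Longrightarrow> base (\<phi> \<otimes>\<^bsub>BG\<^esub> \<psi>) y = base \<phi> (base \<psi> y)"
proof -
  have B1: "\<phi> \<in> Bij E" and B2: "\<psi> \<in> Bij E" using g1 g2 good_Bij by auto
  have fst: "fst ((\<phi> \<otimes>\<^bsub>BG\<^esub> \<psi>) (y, t)) = base \<phi> (base \<psi> y)" if y: "y \<in> carrier G" and t: "t \<in> S" for y t
  proof -
    have "(\<phi> \<otimes>\<^bsub>BG\<^esub> \<psi>) (y, t) = \<phi> (base \<psi> y, snd (\<psi> (y, t)))"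
      using BG_mult_app[OF B1 B2] y t good_app(1)[OF g2 y t] by simp
    then show ?thesis using good_app(1)[OF g1 base_carrier[OF B2 y] good_app(2)[OF g2 y t]] by (metis fst_conv)
  qed
  show b: "\<And>y. y \<in> carrier G \<Longrightarrow> base (\<phi> \<otimes>\<^bsub>BG\<^esub> \<psi>) y = base \<phi> (base \<psi> y)"
    using fst s0 by (simp add: base_def)
  have "\<phi> \<otimes>\<^bsub>BG\<^esub> \<psi> \<in> Bij E" using B1 B2 BG_carrier by (metis B.m_closed)
  moreover have "\<forall>y\<in>carrier G. (\<phi> \<otimes>\<^bsub>BG\<^esub> \<psi>) \<otimes>\<^bsub>BG\<^esub> Lam y = Lam (base (\<phi> \<otimes>\<^bsub>BG\<^esub> \<psi>) y) \<otimes>\<^bsub>BG\<^esub> (\<phi> \<otimes>\<^bsub>BG\<^esub> \<psi>)"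
  proof
    fix y assume y: "y \<in> carrier G"
    have c: "\<phi> \<in> carrier BG" "\<psi> \<in> carrier BG" "Lam y \<in> carrier BG" using B1 B2 BG_carrier Lam_carrier y by auto
    have by': "base \<psi> y \<in> carrier G" using base_carrier[OF B2 y] .
    have "(\<phi> \<otimes>\<^bsub>BG\<^esub> \<psi>) \<otimes>\<^bsub>BG\<^esub> Lam y = \<phi> \<otimes>\<^bsub>BG\<^esub> (Lam (base \<psi> y) \<otimes>\<^bsub>BG\<^esub> \<psi>)"
      using c good_comm[OF g2 y] by (simp add: B.m_assoc)
    also have "\<dots> = Lam (base \<phi> (base \<psi> y)) \<otimes>\<^bsub>BG\<^esub> (\<phi> \<otimes>\<^bsub>BG\<^esub> \<psi>)"
      using c good_comm[OF g1 by'] Lam_carrier[OF by'] Lam_carrier[OF base_carrier[OF B1 by']]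
      by (simp add: B.m_assoc[symmetric])
    finally show "(\<phi> \<otimes>\<^bsub>BG\<^esub> \<psi>) \<otimes>\<^bsub>BG\<^esub> Lam y = Lam (base (\<phi> \<otimes>\<^bsub>BG\<^esub> \<psi>) y) \<otimes>\<^bsub>BG\<^esub> (\<phi> \<otimes>\<^bsub>BG\<^esub> \<psi>)"
      using b[OF y] by simp
  qed
  ultimately show "good (\<phi> \<otimes>\<^bsub>BG\<^esub> \<psi>)" unfolding good_def using fst b by simp
qed

definition "Gam = generate BG (Lam ` carrier G)"

lemma LamG_sub: "Lam ` carrier G \<subseteq> carrier BG" using Lam_carrier by blast

lemma Gam_sub: "subgroup Gam BG"
  unfolding Gam_def using B.generate_is_subgroup[OF LamG_sub] .

lemma Gam_good: "\<phi> \<in> Gam \<Longrightarrow> good \<phi>"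
  unfolding Gam_def
proof (induct \<phi> rule: generate.induct)
  case one then show ?case using good_one .
next
  case (incl h) then show ?case using good_Lam by blast
next
  case (inv h) then show ?case using good_Laminv by blast
next
  case (eng h1 h2) then show ?case using good_mult by blast
qed

lemma Gam_carrier: "\<phi> \<in> Gam \<Longrightarrow> \<phi> \<in> carrier BG"
  using Gam_good good_carrier by blast

lemma Gam_inv: "\<phi> \<in> Gam \<Longrightarrow> inv\<^bsub>BG\<^esub> \<phi> \<in> Gam"
  using subgroup.m_inv_closed[OF Gam_sub] .

lemma Gam_mult: "\<phi> \<in> Gam \<Longrightarrow> \<psi> \<in> Gam \<Longrightarrow> \<phi> \<otimes>\<^bsub>BG\<^esub> \<psi> \<in> Gam"
  using subgroup.m_closed[OF Gam_sub] .

lemma base_inv: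
  assumes \<phi>: "\<phi> \<in> Gam" and y: "y \<in> carrier G"
  shows "base (inv\<^bsub>BG\<^esub> \<phi>) (base \<phi> y) = y" "base \<phi> (base (inv\<^bsub>BG\<^esub> \<phi>) y) = y"
proof -
  have g: "good \<phi>" "good (inv\<^bsub>BG\<^esub> \<phi>)" using Gam_good Gam_inv \<phi> by auto
  have c: "\<phi> \<in> carrier BG" using Gam_carrier \<phi> .
  show "base (inv\<^bsub>BG\<^esub> \<phi>) (base \<phi> y) = y"
    using good_mult(2)[OF g(2) g(1) y] base_one[OF y] B.l_inv[OF c] by simp
  show "base \<phi> (base (inv\<^bsub>BG\<^esub> \<phi>) y) = y"
    using good_mult(2)[OF g(1) g(2) y] base_one[OF y] B.r_inv[OF c] by simp
qed

lemma conj_Lam: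
  assumes g: "good \<phi>" and y: "y \<in> carrier G"
  shows "\<phi> \<otimes>\<^bsub>BG\<^esub> Lam y \<otimes>\<^bsub>BG\<^esub> inv\<^bsub>BG\<^esub> \<phi> = Lam (base \<phi> y)"
proof -
  have c: "\<phi> \<in> carrier BG" using good_carrier[OF g] .
  have "Lam (base \<phi> y) \<in> carrier BG" using Lam_carrier base_carrier good_Bij g y by blast
  then show ?thesis using good_comm[OF g y] c Lam_carrier[OF y] by (simp add: B.m_assoc)
qed

lemma K_central:
  assumes \<kappa>: "\<kappa> \<in> Gam" and k: "\<forall>y\<in>carrier G. base \<kappa> y = y" and \<psi>: "\<psi> \<in> Gam"
  shows "\<kappa> \<otimes>\<^bsub>BG\<^esub> \<psi> = \<psi> \<otimes>\<^bsub>BG\<^esub> \<kappa>"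
proof -
  have "\<forall>x\<in>Lam ` carrier G. \<kappa> \<otimes>\<^bsub>BG\<^esub> x = x \<otimes>\<^bsub>BG\<^esub> \<kappa>"
    using good_comm[OF Gam_good[OF \<kappa>]] k by auto
  then show ?thesis using B.comm_generate[OF Gam_carrier[OF \<kappa>] LamG_sub] \<psi> unfolding Gam_def by blast
qed

end


lemma (in group) comm_pow:
  assumes "a \<in> carrier G" "c \<in> carrier G" "c \<otimes> a = a \<otimes> c"
  shows "c \<otimes> a [^] (n::nat) = a [^] n \<otimes> c"
proof (induct n)
  case 0 then show ?case using assms by simp
next
  case (Suc n)
  have "c \<otimes> a [^] Suc n = (c \<otimes> a [^] n) \<otimes> a" using assms by (simp add: m_assoc)
  also have "\<dots> = a [^] n \<otimes> (c \<otimes> a)" using Suc assms by (simp add: m_assoc)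
  also have "\<dots> = a [^] Suc n \<otimes> c" using assms by (simp add: m_assoc)
  finally show ?case .
qed

lemma (in group) comm_pow_lemma:
  assumes a: "a \<in> carrier G" and b: "b \<in> carrier G" and c: "c \<in> carrier G"
    and e: "a \<otimes> b \<otimes> inv a = c \<otimes> b" and ca: "c \<otimes> a = a \<otimes> c"
    and an: "a [^] (n::nat) \<otimes> b = b \<otimes> a [^] n"
  shows "c [^] n = \<one>"
proof -
  have key: "a [^] m \<otimes> b \<otimes> inv (a [^] m) = c [^] m \<otimes> b" for m :: nat
  proof (induct m)
    case 0 then show ?case using b by simp
  next
    case (Suc m)
    have "a [^] Suc m \<otimes> b \<otimes> inv (a [^] Suc m) = a [^] m \<otimes> (a \<otimes> b \<otimes> inv a) \<otimes> inv (a [^] m)"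
      using a b by (simp add: m_assoc inv_mult_group)
    also have "\<dots> = a [^] m \<otimes> c \<otimes> b \<otimes> inv (a [^] m)" using e a b c by (simp add: m_assoc)
    also have "\<dots> = (c \<otimes> a [^] m) \<otimes> b \<otimes> inv (a [^] m)"
      using comm_pow[OF a c ca, of m] by simp
    also have "\<dots> = c \<otimes> (a [^] m \<otimes> b \<otimes> inv (a [^] m))"
      using a b c by (simp add: m_assoc)
    also have "\<dots> = c \<otimes> (c [^] m \<otimes> b)" using Suc by simp
    also have "\<dots> = (c \<otimes> c [^] m) \<otimes> b" using c b by (simp add: m_assoc)
    also have "c \<otimes> c [^] m = c [^] Suc m" using c nat_pow_Suc2 by simp
    finally show ?case .
  qed
  have "a [^] n \<otimes> b \<otimes> inv (a [^] n) = b" using an a b by (simp add: m_assoc)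
  then have "c [^] n \<otimes> b = b" using key by simp
  then show ?thesis using b c by simp
qed

context cocyc begin

definition "D x y = Lam x \<otimes>\<^bsub>BG\<^esub> inv\<^bsub>BG\<^esub> (Lam y)"
definition "istr \<phi> c \<longleftrightarrow> (\<forall>z\<in>carrier G. base \<phi> z = c \<otimes> z)"
definition "Dset p = {D x y | x y. x \<in> carrier G \<and> y \<in> carrier G \<and> inv x \<otimes> y \<in> Syl p}"
definition "A p = generate BG (Dset p)"

lemma D_Gam: "x \<in> carrier G \<Longrightarrow> y \<in> carrier G \<Longrightarrow> D x y \<in> Gam"
  unfolding D_def Gam_def
  by (rule generate.eng) (auto intro: generate.incl generate.inv)

lemma D_carrier: "x \<in> carrier G \<Longrightarrow> y \<in> carrier G \<Longrightarrow> D x y \<in> carrier BG"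
  using D_Gam Gam_carrier by blast

lemma base_D:
  assumes x: "x \<in> carrier G" and y: "y \<in> carrier G"
  shows "istr (D x y) (x \<otimes> f (inv x \<otimes> y) \<otimes> inv y)"
  unfolding istr_def D_def
  using good_mult(2)[OF good_Lam[OF x] good_Laminv[OF y]] base_Lam[OF x] base_Laminv[OF y]
    qo_Li_tr[OF x y] Li_carrier[OF y] by simp

lemma D_c_Syl:
  assumes p: "p \<in> PF" and x: "x \<in> carrier G" and y: "y \<in> carrier G" and u: "inv x \<otimes> y \<in> Syl p"
  shows "x \<otimes> f (inv x \<otimes> y) \<otimes> inv y \<in> Syl p"
proof -
  let ?u = "inv x \<otimes> y"
  have uc: "?u \<in> carrier G" using x y by simp
  have yy: "y = x \<otimes> ?u" using x y by (simp add: m_assoc[symmetric])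
  have "f ?u \<otimes> inv ?u \<in> Syl p"
    using subgroup.m_closed[OF Syl_sub[OF p] f_Syl[OF p u] subgroup.m_inv_closed[OF Syl_sub[OF p] u]] .
  then have "x \<otimes> (f ?u \<otimes> inv ?u) \<otimes> inv x \<in> Syl p"
    using normal.inv_op_closed2[OF Syl_normal[OF p] x] by blast
  moreover have "x \<otimes> f ?u \<otimes> inv y = x \<otimes> (f ?u \<otimes> inv ?u) \<otimes> inv x"
    using x uc f_carrier[OF uc] by (subst yy) (simp add: m_assoc inv_mult_group)
  ultimately show ?thesis by simp
qed

lemma Dset_Gam: "Dset p \<subseteq> Gam" unfolding Dset_def using D_Gam by blast

lemma Dset_carrier: "Dset p \<subseteq> carrier BG" using Dset_Gam Gam_carrier by blast

lemma A_sub: "subgroup (A p) BG"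
  unfolding A_def using B.generate_is_subgroup[OF Dset_carrier] .

lemma A_Gam: "A p \<subseteq> Gam"
  unfolding A_def using B.generate_subgroup_incl[OF Dset_Gam Gam_sub] .

lemma istr_mult:
  assumes "\<phi> \<in> Gam" "\<psi> \<in> Gam" "istr \<phi> c" "istr \<psi> d" "c \<in> carrier G" "d \<in> carrier G"
  shows "istr (\<phi> \<otimes>\<^bsub>BG\<^esub> \<psi>) (c \<otimes> d)"
  unfolding istr_def using good_mult(2)[OF Gam_good Gam_good] assms
  by (simp add: istr_def m_assoc)

lemma istr_inv:
  assumes "\<phi> \<in> Gam" "istr \<phi> c" "c \<in> carrier G"
  shows "istr (inv\<^bsub>BG\<^esub> \<phi>) (inv c)"
  unfolding istr_def
proof
  fix z assume z: "z \<in> carrier G"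
  have bz: "base (inv\<^bsub>BG\<^esub> \<phi>) z \<in> carrier G"
    using base_carrier good_Bij Gam_good Gam_inv assms(1) z by blast
  have "c \<otimes> base (inv\<^bsub>BG\<^esub> \<phi>) z = z" using base_inv(2)[OF assms(1) z] assms(2) bz by (simp add: istr_def)
  then show "base (inv\<^bsub>BG\<^esub> \<phi>) z = inv c \<otimes> z" using assms(3) bz z by (metis inv_cancel_left1)
qed

lemma istr_one: "istr \<one>\<^bsub>BG\<^esub> \<one>" unfolding istr_def using base_one by simp

lemma istr_pow:
  assumes "\<phi> \<in> Gam" "istr \<phi> c" "c \<in> carrier G"
  shows "istr (\<phi> [^]\<^bsub>BG\<^esub> (n::nat)) (c [^] n)"
proof (induct n)
  case 0 then show ?case using istr_one by simp
next
  case (Suc n)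
  have "\<phi> [^]\<^bsub>BG\<^esub> n \<in> Gam" using B.subgroup_pow_closed[OF Gam_sub assms(1)] .
  then show ?case using istr_mult[OF _ assms(1) Suc assms(2) _ assms(3)] assms(3) by simp
qed

lemma A_tr: "p \<in> PF \<Longrightarrow> \<alpha> \<in> A p \<Longrightarrow> \<exists>c\<in>Syl p. istr \<alpha> c"
proof -
  assume p: "p \<in> PF" and a: "\<alpha> \<in> A p"
  have Sc: "\<And>c. c \<in> Syl p \<Longrightarrow> c \<in> carrier G" using Syl_carrier[OF p] .
  from a show ?thesis unfolding A_def
  proof (induct \<alpha> rule: generate.induct)
    case one then show ?case using istr_one subgroup.one_closed[OF Syl_sub[OF p]] by blast
  next
    case (incl h)
    then obtain x y where h: "h = D x y" "x \<in> carrier G" "y \<in> carrier G" "inv x \<otimes> y \<in> Syl p"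
      by (auto simp: Dset_def)
    then show ?case using base_D D_c_Syl[OF p] by blast
  next
    case (inv h)
    then obtain x y where h: "h = D x y" "x \<in> carrier G" "y \<in> carrier G" "inv x \<otimes> y \<in> Syl p"
      by (auto simp: Dset_def)
    let ?c = "x \<otimes> f (inv x \<otimes> y) \<otimes> inv y"
    have "istr (inv\<^bsub>BG\<^esub> h) (inv ?c)" using istr_inv[OF _ base_D] D_Gam h f_carrier by simp
    moreover have "inv ?c \<in> Syl p" using subgroup.m_inv_closed[OF Syl_sub[OF p] D_c_Syl[OF p h(2-4)]] .
    ultimately show ?case by blast
  next
    case (eng h1 h2)
    then obtain c1 c2 where c: "c1 \<in> Syl p" "istr h1 c1" "c2 \<in> Syl p" "istr h2 c2" by blast
    have "h1 \<in> Gam" "h2 \<in> Gam" using eng A_Gam A_def by auto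
    then have "istr (h1 \<otimes>\<^bsub>BG\<^esub> h2) (c1 \<otimes> c2)" using istr_mult c Sc by blast
    moreover have "c1 \<otimes> c2 \<in> Syl p" using subgroup.m_closed[OF Syl_sub[OF p]] c by blast
    ultimately show ?case by blast
  qed
qed

lemma istr_id: "istr \<phi> \<one> \<Longrightarrow> \<forall>y\<in>carrier G. base \<phi> y = y"
  by (simp add: istr_def)

lemma A_comm:
  assumes p: "p \<in> PF" and q: "q \<in> PF" and pq: "p \<noteq> q" and \<alpha>: "\<alpha> \<in> A p" and \<beta>: "\<beta> \<in> A q"
  shows "\<alpha> \<otimes>\<^bsub>BG\<^esub> \<beta> = \<beta> \<otimes>\<^bsub>BG\<^esub> \<alpha>"
proof -
  obtain a where a: "a \<in> Syl p" "istr \<alpha> a" using A_tr[OF p \<alpha>] by blast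
  obtain b where b: "b \<in> Syl q" "istr \<beta> b" using A_tr[OF q \<beta>] by blast
  have ac: "a \<in> carrier G" and bc: "b \<in> carrier G" using a b Syl_carrier p q by auto
  have ab: "a \<otimes> b = b \<otimes> a" using syl_comm[OF p q pq a(1) b(1)] .
  have aG: "\<alpha> \<in> Gam" and bG: "\<beta> \<in> Gam" using \<alpha> \<beta> A_Gam by auto
  have aB: "\<alpha> \<in> carrier BG" and bB: "\<beta> \<in> carrier BG" using aG bG Gam_carrier by auto
  define c where "c = \<alpha> \<otimes>\<^bsub>BG\<^esub> \<beta> \<otimes>\<^bsub>BG\<^esub> inv\<^bsub>BG\<^esub> \<alpha> \<otimes>\<^bsub>BG\<^esub> inv\<^bsub>BG\<^esub> \<beta>"
  have cG: "c \<in> Gam" unfolding c_def using aG bG Gam_inv Gam_mult by simp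
  have cB: "c \<in> carrier BG" using cG Gam_carrier by blast
  have "istr c (a \<otimes> b \<otimes> inv a \<otimes> inv b)" unfolding c_def
    using istr_mult istr_inv aG bG Gam_inv Gam_mult a b ac bc by simp
  moreover have "a \<otimes> b \<otimes> inv a \<otimes> inv b = \<one>" using ab ac bc by (simp add: m_assoc)
  ultimately have cid: "\<forall>y\<in>carrier G. base c y = y" using istr_id by simp
  have cent: "\<And>\<psi>. \<psi> \<in> Gam \<Longrightarrow> c \<otimes>\<^bsub>BG\<^esub> \<psi> = \<psi> \<otimes>\<^bsub>BG\<^esub> c" using K_central[OF cG cid] .
  have ic: "inv\<^bsub>BG\<^esub> c \<in> Gam" using Gam_inv[OF cG] .
  have icid: "\<forall>y\<in>carrier G. base (inv\<^bsub>BG\<^esub> c) y = y" using base_inv(1)[OF cG] cid by simp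
  have icent: "\<And>\<psi>. \<psi> \<in> Gam \<Longrightarrow> inv\<^bsub>BG\<^esub> c \<otimes>\<^bsub>BG\<^esub> \<psi> = \<psi> \<otimes>\<^bsub>BG\<^esub> inv\<^bsub>BG\<^esub> c"
    using K_central[OF ic icid] .
  define N where "N = p ^ kk p"
  define M where "M = q ^ kk q"
  have aN: "\<alpha> [^]\<^bsub>BG\<^esub> N \<otimes>\<^bsub>BG\<^esub> \<beta> = \<beta> \<otimes>\<^bsub>BG\<^esub> \<alpha> [^]\<^bsub>BG\<^esub> N"
  proof -
    have "istr (\<alpha> [^]\<^bsub>BG\<^esub> N) (a [^] N)" using istr_pow[OF aG a(2) ac] .
    then have "\<forall>y\<in>carrier G. base (\<alpha> [^]\<^bsub>BG\<^esub> N) y = y" using Syl_pow[OF p a(1)] istr_id N_def by simp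
    then show ?thesis using K_central[OF B.subgroup_pow_closed[OF Gam_sub aG] _ bG] by blast
  qed
  have bM: "\<beta> [^]\<^bsub>BG\<^esub> M \<otimes>\<^bsub>BG\<^esub> \<alpha> = \<alpha> \<otimes>\<^bsub>BG\<^esub> \<beta> [^]\<^bsub>BG\<^esub> M"
  proof -
    have "istr (\<beta> [^]\<^bsub>BG\<^esub> M) (b [^] M)" using istr_pow[OF bG b(2) bc] .
    then have "\<forall>y\<in>carrier G. base (\<beta> [^]\<^bsub>BG\<^esub> M) y = y" using Syl_pow[OF q b(1)] istr_id M_def by simp
    then show ?thesis using K_central[OF B.subgroup_pow_closed[OF Gam_sub bG] _ aG] by blast
  qed
  have e1: "\<alpha> \<otimes>\<^bsub>BG\<^esub> \<beta> \<otimes>\<^bsub>BG\<^esub> inv\<^bsub>BG\<^esub> \<alpha> = c \<otimes>\<^bsub>BG\<^esub> \<beta>"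
    unfolding c_def using aB bB by (simp add: B.m_assoc)
  have cN: "c [^]\<^bsub>BG\<^esub> N = \<one>\<^bsub>BG\<^esub>"
    using B.comm_pow_lemma[OF aB bB cB e1 cent[OF aG] aN] .
  have e2: "\<beta> \<otimes>\<^bsub>BG\<^esub> \<alpha> \<otimes>\<^bsub>BG\<^esub> inv\<^bsub>BG\<^esub> \<beta> = inv\<^bsub>BG\<^esub> c \<otimes>\<^bsub>BG\<^esub> \<alpha>"
    unfolding c_def using aB bB by (simp add: B.m_assoc B.inv_mult_group)
  have icM: "(inv\<^bsub>BG\<^esub> c) [^]\<^bsub>BG\<^esub> M = \<one>\<^bsub>BG\<^esub>"
    using B.comm_pow_lemma[OF bB aB B.inv_closed[OF cB] e2 icent[OF bG] bM] .
  then have "inv\<^bsub>BG\<^esub> (c [^]\<^bsub>BG\<^esub> M) = \<one>\<^bsub>BG\<^esub>" using B.nat_pow_inv[OF cB] by simp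
  then have cM: "c [^]\<^bsub>BG\<^esub> M = \<one>\<^bsub>BG\<^esub>" by (metis B.inv_inv B.inv_one B.nat_pow_closed cB)
  have "coprime N M" unfolding N_def M_def using primes_coprime[OF PF_prime[OF p] PF_prime[OF q] pq] by simp
  then have "c = \<one>\<^bsub>BG\<^esub>" using B.pow_coprime_one[OF cB cN cM] by simp
  then have "\<alpha> \<otimes>\<^bsub>BG\<^esub> \<beta> \<otimes>\<^bsub>BG\<^esub> inv\<^bsub>BG\<^esub> \<alpha> \<otimes>\<^bsub>BG\<^esub> inv\<^bsub>BG\<^esub> \<beta> \<otimes>\<^bsub>BG\<^esub> \<beta> \<otimes>\<^bsub>BG\<^esub> \<alpha> = \<beta> \<otimes>\<^bsub>BG\<^esub> \<alpha>"
    unfolding c_def using aB bB by simp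
  then show ?thesis using aB bB by (simp add: B.m_assoc)
qed

end


lemma (in group) conj_generate:
  assumes g: "g \<in> carrier G" and XX: "XX \<subseteq> carrier G"
    and c: "\<forall>x\<in>XX. g \<otimes> x \<otimes> inv g \<in> generate G XX" and h: "h \<in> generate G XX"
  shows "g \<otimes> h \<otimes> inv g \<in> generate G XX"
  using h
proof (induct h rule: generate.induct)
  case one then show ?case using g generate.one by simp
next
  case (incl h) then show ?case using c by blast
next
  case (inv h)
  have hc: "h \<in> carrier G" using inv XX by blast
  have "g \<otimes> inv h \<otimes> inv g = inv (g \<otimes> h \<otimes> inv g)" using g hc by (simp add: inv_mult_group m_assoc)
  then show ?case using c inv generate_m_inv_closed[OF XX] by simp
next
  case (eng h1 h2)
  have h: "h1 \<in> carrier G" "h2 \<in> carrier G" using eng generate_in_carrier[OF XX] by auto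
  have "g \<otimes> (h1 \<otimes> h2) \<otimes> inv g = (g \<otimes> h1 \<otimes> inv g) \<otimes> (g \<otimes> h2 \<otimes> inv g)"
    using g h by (simp add: m_assoc)
  then show ?case using eng generate.eng by simp
qed

lemma (in group) pd_lemma:
  assumes H: "subgroup H G" and Y: "Y \<subseteq> carrier G"
    and nm: "\<forall>y\<in>Y. \<forall>h\<in>H. y \<otimes> h \<otimes> inv y \<in> H \<and> inv y \<otimes> h \<otimes> y \<in> H"
    and \<phi>: "\<phi> \<in> generate G (H \<union> Y)"
  shows "\<exists>h\<in>H. \<exists>k\<in>generate G Y. \<phi> = h \<otimes> k"
proof -
  have Hc: "H \<subseteq> carrier G" using subgroup.subset[OF H] .
  have kn: "\<forall>h\<in>H. k \<otimes> h \<otimes> inv k \<in> H" if k: "k \<in> generate G Y" for k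
    using k
  proof (induct k rule: generate.induct)
    case one then show ?case using Hc by auto
  next
    case (incl y) then show ?case using nm by blast
  next
    case (inv y) then show ?case using nm Y by auto
  next
    case (eng k1 k2)
    have k: "k1 \<in> carrier G" "k2 \<in> carrier G" using eng generate_in_carrier[OF Y] by auto
    show ?case
    proof
      fix h assume h: "h \<in> H"
      have "k2 \<otimes> h \<otimes> inv k2 \<in> H" using eng h by blast
      then have "k1 \<otimes> (k2 \<otimes> h \<otimes> inv k2) \<otimes> inv k1 \<in> H" using eng by blast
      moreover have "k1 \<otimes> (k2 \<otimes> h \<otimes> inv k2) \<otimes> inv k1 = (k1 \<otimes> k2) \<otimes> h \<otimes> inv (k1 \<otimes> k2)"
        using k h Hc by (simp add: m_assoc inv_mult_group subsetD)
      ultimately show "(k1 \<otimes> k2) \<otimes> h \<otimes> inv (k1 \<otimes> k2) \<in> H" by simp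
    qed
  qed
  have HY: "H \<union> Y \<subseteq> carrier G" using Hc Y by blast
  from \<phi> show ?thesis
  proof (induct \<phi> rule: generate.induct)
    case one then show ?case using subgroup.one_closed[OF H] generate.one by force
  next
    case (incl x)
    show ?case
    proof (cases "x \<in> H")
      case True then show ?thesis using generate.one Hc by force
    next
      case False then have "x \<in> Y" using incl by blast
      then show ?thesis using subgroup.one_closed[OF H] generate.incl[of x Y] Y by force
    qed
  next
    case (inv x)
    show ?case
    proof (cases "x \<in> H")
      case True
      have "inv x \<in> H" using subgroup.m_inv_closed[OF H True] .
      then show ?thesis using generate.one Hc by force
    next
      case False then have "x \<in> Y" using inv by blast
      then show ?thesis using subgroup.one_closed[OF H] generate.inv[of x Y] Y by force
    qed
  next
    case (eng x1 x2)
    then obtain h1 k1 h2 k2 where d: "h1 \<in> H" "k1 \<in> generate G Y" "x1 = h1 \<otimes> k1"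
      "h2 \<in> H" "k2 \<in> generate G Y" "x2 = h2 \<otimes> k2" by blast
    have c: "h1 \<in> carrier G" "h2 \<in> carrier G" "k1 \<in> carrier G" "k2 \<in> carrier G"
      using d Hc generate_in_carrier[OF Y] by auto
    have "x1 \<otimes> x2 = (h1 \<otimes> (k1 \<otimes> h2 \<otimes> inv k1)) \<otimes> (k1 \<otimes> k2)"
      using d c by (simp add: m_assoc)
    moreover have "h1 \<otimes> (k1 \<otimes> h2 \<otimes> inv k1) \<in> H"
    proof -
      have "k1 \<otimes> h2 \<otimes> inv k1 \<in> H" using kn[OF d(2)] d(4) by blast
      then show ?thesis using subgroup.m_closed[OF H d(1)] by blast
    qed
    moreover have "k1 \<otimes> k2 \<in> generate G Y" using generate.eng[OF d(2) d(5)] .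
    ultimately show ?case by (intro bexI)
  qed
qed

context nilp begin
lemma finv_inv: "x \<in> carrier G \<Longrightarrow> finv (inv x) = inv (finv x)"
  by (rule f_inj) (simp_all add: f_finv finv_carrier f_inv)
end

context cocyc begin

lemma conj_D:
  assumes g: "good \<phi>" and x: "x \<in> carrier G" and y: "y \<in> carrier G"
  shows "\<phi> \<otimes>\<^bsub>BG\<^esub> D x y \<otimes>\<^bsub>BG\<^esub> inv\<^bsub>BG\<^esub> \<phi> = D (base \<phi> x) (base \<phi> y)"
proof -
  have c: "\<phi> \<in> carrier BG" using good_carrier[OF g] .
  have L: "Lam x \<in> carrier BG" "Lam y \<in> carrier BG" using Lam_carrier x y by auto
  have "\<phi> \<otimes>\<^bsub>BG\<^esub> D x y \<otimes>\<^bsub>BG\<^esub> inv\<^bsub>BG\<^esub> \<phi> =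
      (\<phi> \<otimes>\<^bsub>BG\<^esub> Lam x \<otimes>\<^bsub>BG\<^esub> inv\<^bsub>BG\<^esub> \<phi>) \<otimes>\<^bsub>BG\<^esub> inv\<^bsub>BG\<^esub> (\<phi> \<otimes>\<^bsub>BG\<^esub> Lam y \<otimes>\<^bsub>BG\<^esub> inv\<^bsub>BG\<^esub> \<phi>)"
    unfolding D_def using c L by (simp add: B.m_assoc B.inv_mult_group)
  then show ?thesis using conj_Lam[OF g x] conj_Lam[OF g y] by (simp add: D_def)
qed

definition "L1 = generate BG {Lam \<one>}"

lemma Lam1_fix: "t \<in> S \<Longrightarrow> Lam \<one> (\<one>, t) = (\<one>, t)"
  using Lam_app[of \<one> t \<one>] qo_idem[of \<one>] th_id[of \<one> t] by simp

lemma L1_fix: "\<rho> \<in> L1 \<Longrightarrow> t \<in> S \<Longrightarrow> \<rho> (\<one>, t) = (\<one>, t)"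
  unfolding L1_def
proof (induct \<rho> arbitrary: t rule: generate.induct)
  case one then show ?case using BG_one_app by simp
next
  case (incl h) then show ?case using Lam1_fix by simp
next
  case (inv h) then show ?case using BG_inv_app[OF Lam_Bij[of \<one>] _ Lam1_fix] by simp
next
  case (eng h1 h2)
  have "h1 \<in> carrier BG" "h2 \<in> carrier BG"
    using eng B.generate_in_carrier[of "{Lam \<one>}"] Lam_carrier by auto
  then show ?case using eng BG_mult_app BG_carrier by simp
qed

lemma L1_base: "\<rho> \<in> L1 \<Longrightarrow> base \<rho> \<one> = \<one>"
proof -
  assume r: "\<rho> \<in> L1"
  show ?thesis unfolding base_def using L1_fix[OF r s0] by simp
qed

lemma L1_Gam: "L1 \<subseteq> Gam"
  unfolding L1_def Gam_def by (rule B.mono_generate) simp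

lemma Lam1_good: "good (Lam \<one>)" "good (inv\<^bsub>BG\<^esub> (Lam \<one>))" using good_Lam good_Laminv by auto

lemma A_norm:
  assumes p: "p \<in> PF" and h: "h \<in> A p"
  shows "Lam \<one> \<otimes>\<^bsub>BG\<^esub> h \<otimes>\<^bsub>BG\<^esub> inv\<^bsub>BG\<^esub> (Lam \<one>) \<in> A p"
    "inv\<^bsub>BG\<^esub> (Lam \<one>) \<otimes>\<^bsub>BG\<^esub> h \<otimes>\<^bsub>BG\<^esub> (Lam \<one>) \<in> A p"
proof -
  have c: "Lam \<one> \<in> carrier BG" "inv\<^bsub>BG\<^esub> (Lam \<one>) \<in> carrier BG" using Lam_carrier by auto
  have g1: "\<forall>x\<in>Dset p. Lam \<one> \<otimes>\<^bsub>BG\<^esub> x \<otimes>\<^bsub>BG\<^esub> inv\<^bsub>BG\<^esub> (Lam \<one>) \<in> generate BG (Dset p)"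
  proof
    fix d assume "d \<in> Dset p"
    then obtain x y where d: "d = D x y" "x \<in> carrier G" "y \<in> carrier G" "inv x \<otimes> y \<in> Syl p"
      by (auto simp: Dset_def)
    have "Lam \<one> \<otimes>\<^bsub>BG\<^esub> d \<otimes>\<^bsub>BG\<^esub> inv\<^bsub>BG\<^esub> (Lam \<one>) = D (f x) (f y)"
      using conj_D[OF Lam1_good(1) d(2,3)] d base_Lam qo_one by simp
    moreover have "inv (f x) \<otimes> f y \<in> Syl p" using f_Syl[OF p d(4)] d f_mult f_inv by simp
    ultimately show "Lam \<one> \<otimes>\<^bsub>BG\<^esub> d \<otimes>\<^bsub>BG\<^esub> inv\<^bsub>BG\<^esub> (Lam \<one>) \<in> generate BG (Dset p)"
      using d f_carrier by (auto simp: Dset_def intro!: generate.incl)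
  qed
  show "Lam \<one> \<otimes>\<^bsub>BG\<^esub> h \<otimes>\<^bsub>BG\<^esub> inv\<^bsub>BG\<^esub> (Lam \<one>) \<in> A p"
    using B.conj_generate[OF c(1) Dset_carrier g1] h by (simp add: A_def)
  have g2: "\<forall>x\<in>Dset p. inv\<^bsub>BG\<^esub> (Lam \<one>) \<otimes>\<^bsub>BG\<^esub> x \<otimes>\<^bsub>BG\<^esub> inv\<^bsub>BG\<^esub> (inv\<^bsub>BG\<^esub> (Lam \<one>)) \<in> generate BG (Dset p)"
  proof
    fix d assume "d \<in> Dset p"
    then obtain x y where d: "d = D x y" "x \<in> carrier G" "y \<in> carrier G" "inv x \<otimes> y \<in> Syl p"
      by (auto simp: Dset_def)
    have "inv\<^bsub>BG\<^esub> (Lam \<one>) \<otimes>\<^bsub>BG\<^esub> d \<otimes>\<^bsub>BG\<^esub> inv\<^bsub>BG\<^esub> (inv\<^bsub>BG\<^esub> (Lam \<one>)) = D (finv x) (finv y)"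
      using conj_D[OF Lam1_good(2) d(2,3)] d base_Laminv Li_one by simp
    moreover have "inv (finv x) \<otimes> finv y \<in> Syl p" using finv_Syl'[OF p d(4)] d finv_mult finv_inv by simp
    ultimately show "inv\<^bsub>BG\<^esub> (Lam \<one>) \<otimes>\<^bsub>BG\<^esub> d \<otimes>\<^bsub>BG\<^esub> inv\<^bsub>BG\<^esub> (inv\<^bsub>BG\<^esub> (Lam \<one>)) \<in> generate BG (Dset p)"
      using d finv_carrier by (auto simp: Dset_def intro!: generate.incl)
  qed
  show "inv\<^bsub>BG\<^esub> (Lam \<one>) \<otimes>\<^bsub>BG\<^esub> h \<otimes>\<^bsub>BG\<^esub> (Lam \<one>) \<in> A p"
    using B.conj_generate[OF c(2) Dset_carrier g2] h c by (simp add: A_def)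
qed

lemma lift:
  assumes H: "subgroup H G" and fH: "\<forall>s\<in>H. f s \<in> H" and fiH: "\<forall>s\<in>H. finv s \<in> H"
    and g: "g \<in> inn_gen H qo"
  shows "(\<forall>z\<in>H. g z \<in> H) \<and> (\<exists>W \<in> generate BG (Lam ` H). \<forall>z\<in>H. base W z = g z)"
  using g
proof (induct g rule: inn_gen.induct)
  have Hc: "\<And>x. x \<in> H \<Longrightarrow> x \<in> carrier G" using subgroup.mem_carrier[OF H] .
  case id_in
  show ?case
  proof (intro conjI)
    show "\<forall>z\<in>H. id z \<in> H" by simp
    have "\<forall>z\<in>H. base \<one>\<^bsub>BG\<^esub> z = id z" using base_one Hc by simp
    then show "\<exists>W\<in>generate BG (Lam ` H). \<forall>z\<in>H. base W z = id z"
      using generate.one[of BG "Lam ` H"] by blast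
  qed
next
  have Hc: "\<And>x. x \<in> H \<Longrightarrow> x \<in> carrier G" using subgroup.mem_carrier[OF H] .
  have q: "quandle H qo" using quandle_sub[OF H fH fiH] .
  have sub: "generate BG (Lam ` H) \<subseteq> Gam" unfolding Gam_def using Hc by (intro B.mono_generate) auto
  case (L_in g x)
  then obtain W where W: "W \<in> generate BG (Lam ` H)" "\<forall>z\<in>H. base W z = g z" by blast
  have "Lam x \<otimes>\<^bsub>BG\<^esub> W \<in> generate BG (Lam ` H)" by (rule generate.eng[OF generate.incl W(1)]) (use L_in in blast)
  moreover have "\<forall>z\<in>H. base (Lam x \<otimes>\<^bsub>BG\<^esub> W) z = (qo x \<circ> g) z"
    using good_mult(2)[OF good_Lam Gam_good] W sub L_in Hc base_Lam by auto
  moreover have "\<forall>z\<in>H. (qo x \<circ> g) z \<in> H" using q L_in by (simp add: quandle_def)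
  ultimately show ?case by blast
next
  have Hc: "\<And>x. x \<in> H \<Longrightarrow> x \<in> carrier G" using subgroup.mem_carrier[OF H] .
  have q: "quandle H qo" using quandle_sub[OF H fH fiH] .
  have sub: "generate BG (Lam ` H) \<subseteq> Gam" unfolding Gam_def using Hc by (intro B.mono_generate) auto
  case (Linv_in g x)
  then obtain W where W: "W \<in> generate BG (Lam ` H)" "\<forall>z\<in>H. base W z = g z" by blast
  have LiH: "Li x w \<in> H" if w: "w \<in> H" for w
  proof -
    have "inv x \<otimes> w \<in> H" using subgroup.m_closed[OF H subgroup.m_inv_closed[OF H Linv_in(3)] w] .
    then have "finv (inv x \<otimes> w) \<in> H" using fiH by blast
    then show ?thesis unfolding Li_def using subgroup.m_closed[OF H Linv_in(3)] by blast
  qed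
  have ii: "inv_into H (qo x) w = Li x w" if w: "w \<in> H" for w
  proof (rule inv_into_f_eq)
    show "inj_on (qo x) H" using q Linv_in by (simp add: quandle_def bij_betw_def)
    show "Li x w \<in> H" using LiH w .
    show "qo x (Li x w) = w" using qo_Li Hc Linv_in w by blast
  qed
  have "inv\<^bsub>BG\<^esub> (Lam x) \<otimes>\<^bsub>BG\<^esub> W \<in> generate BG (Lam ` H)" by (rule generate.eng[OF generate.inv W(1)]) (use Linv_in in blast)
  moreover have "\<forall>z\<in>H. base (inv\<^bsub>BG\<^esub> (Lam x) \<otimes>\<^bsub>BG\<^esub> W) z = (inv_into H (qo x) \<circ> g) z"
    using good_mult(2)[OF good_Laminv Gam_good] W sub Linv_in Hc base_Laminv ii by auto
  moreover have "\<forall>z\<in>H. (inv_into H (qo x) \<circ> g) z \<in> H" using ii LiH Linv_in by simp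
  ultimately show ?case by blast
qed

lemma surj_A:
  assumes q: "q \<in> PF" and conn: "quandle_connected (Syl q) qo" and s: "s \<in> Syl q"
  shows "\<exists>\<beta>\<in>A q. istr \<beta> s"
proof -
  have one: "\<one> \<in> Syl q" using subgroup.one_closed[OF Syl_sub[OF q]] .
  obtain g where g: "g \<in> inn_gen (Syl q) qo" "g \<one> = s" using conn one s by (auto simp: quandle_connected_def)
  obtain W where W: "W \<in> generate BG (Lam ` Syl q)" "base W \<one> = s"
    using lift[OF Syl_sub[OF q] Syl_fcl[OF q] Syl_ficl[OF q] g(1)] g(2) one by blast
  have Ysub: "{Lam \<one>} \<subseteq> carrier BG" using Lam_carrier by simp
  have AY: "A q \<union> {Lam \<one>} \<subseteq> carrier BG" using subgroup.subset[OF A_sub] Ysub by blast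
  have "Lam ` Syl q \<subseteq> generate BG (A q \<union> {Lam \<one>})"
  proof
    fix l assume "l \<in> Lam ` Syl q"
    then obtain a where a: "a \<in> Syl q" "l = Lam a" by blast
    have ac: "a \<in> carrier G" using Syl_carrier[OF q a(1)] .
    have "D a \<one> \<in> Dset q" unfolding Dset_def
      using ac subgroup.m_inv_closed[OF Syl_sub[OF q] a(1)] by force
    then have "D a \<one> \<in> A q" unfolding A_def by (rule generate.incl)
    then have "D a \<one> \<otimes>\<^bsub>BG\<^esub> Lam \<one> \<in> generate BG (A q \<union> {Lam \<one>})"
      by (intro generate.eng generate.incl) auto
    moreover have "D a \<one> \<otimes>\<^bsub>BG\<^esub> Lam \<one> = Lam a" unfolding D_def using Lam_carrier ac by (simp add: B.m_assoc)
    ultimately show "l \<in> generate BG (A q \<union> {Lam \<one>})" using a by simp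
  qed
  then have "generate BG (Lam ` Syl q) \<subseteq> generate BG (A q \<union> {Lam \<one>})"
    using B.generate_subgroup_incl[OF _ B.generate_is_subgroup[OF AY]] by blast
  then have "W \<in> generate BG (A q \<union> {Lam \<one>})" using W by blast
  moreover have "\<forall>y\<in>{Lam \<one>}. \<forall>h\<in>A q. y \<otimes>\<^bsub>BG\<^esub> h \<otimes>\<^bsub>BG\<^esub> inv\<^bsub>BG\<^esub> y \<in> A q \<and> inv\<^bsub>BG\<^esub> y \<otimes>\<^bsub>BG\<^esub> h \<otimes>\<^bsub>BG\<^esub> y \<in> A q"
    using A_norm[OF q] by simp
  ultimately obtain \<beta> \<rho> where br: "\<beta> \<in> A q" "\<rho> \<in> L1" "W = \<beta> \<otimes>\<^bsub>BG\<^esub> \<rho>"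
    using B.pd_lemma[OF A_sub Ysub] unfolding L1_def by blast
  obtain c where c: "c \<in> Syl q" "istr \<beta> c" using A_tr[OF q br(1)] by blast
  have "base W \<one> = base \<beta> (base \<rho> \<one>)"
    using good_mult(2)[OF Gam_good Gam_good] br A_Gam L1_Gam by blast
  also have "\<dots> = c" using L1_base[OF br(2)] c(2) Syl_carrier[OF q c(1)] by (simp add: istr_def)
  finally have "c = s" using W by simp
  then show ?thesis using c br by blast
qed

end


context cocyc begin

lemma BL_beta:
  assumes p: "p \<in> PF" and conn: "\<forall>q\<in>PF. quandle_connected (Syl q) qo"
  shows "set qs \<subseteq> PF - {p} \<Longrightarrow> h \<in> BL qs \<Longrightarrow>
     \<exists>\<beta>\<in>Gam. istr \<beta> h \<and> (\<forall>\<alpha>\<in>A p. \<alpha> \<otimes>\<^bsub>BG\<^esub> \<beta> = \<beta> \<otimes>\<^bsub>BG\<^esub> \<alpha>)"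
proof (induct qs arbitrary: h)
  case Nil
  then have "h = \<one>" by simp
  moreover have "\<forall>\<alpha>\<in>A p. \<alpha> \<otimes>\<^bsub>BG\<^esub> \<one>\<^bsub>BG\<^esub> = \<one>\<^bsub>BG\<^esub> \<otimes>\<^bsub>BG\<^esub> \<alpha>"
  proof
    fix \<alpha> assume "\<alpha> \<in> A p"
    then have "\<alpha> \<in> carrier BG" using A_Gam Gam_carrier by blast
    then show "\<alpha> \<otimes>\<^bsub>BG\<^esub> \<one>\<^bsub>BG\<^esub> = \<one>\<^bsub>BG\<^esub> \<otimes>\<^bsub>BG\<^esub> \<alpha>" by simp
  qed
  ultimately show ?case using istr_one subgroup.one_closed[OF Gam_sub] by blast
next
  case (Cons q qs)
  then obtain s h' where sh: "h = s \<otimes> h'" "s \<in> Syl q" "h' \<in> BL qs" by auto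
  have q: "q \<in> PF" "q \<noteq> p" using Cons.prems by auto
  obtain \<beta>1 where b1: "\<beta>1 \<in> A q" "istr \<beta>1 s" using surj_A[OF q(1)] conn q sh by blast
  obtain \<beta>2 where b2: "\<beta>2 \<in> Gam" "istr \<beta>2 h'" "\<forall>\<alpha>\<in>A p. \<alpha> \<otimes>\<^bsub>BG\<^esub> \<beta>2 = \<beta>2 \<otimes>\<^bsub>BG\<^esub> \<alpha>"
    using Cons.hyps[OF _ sh(3)] Cons.prems by auto
  have b1G: "\<beta>1 \<in> Gam" using b1 A_Gam by blast
  have sc: "s \<in> carrier G" using Syl_carrier[OF q(1) sh(2)] .
  have hc: "h' \<in> carrier G" using BL_carrier[OF _ sh(3)] Cons.prems by auto
  have "istr (\<beta>1 \<otimes>\<^bsub>BG\<^esub> \<beta>2) h" using istr_mult[OF b1G b2(1) b1(2) b2(2) sc hc] sh by simp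
  moreover have "\<forall>\<alpha>\<in>A p. \<alpha> \<otimes>\<^bsub>BG\<^esub> (\<beta>1 \<otimes>\<^bsub>BG\<^esub> \<beta>2) = (\<beta>1 \<otimes>\<^bsub>BG\<^esub> \<beta>2) \<otimes>\<^bsub>BG\<^esub> \<alpha>"
  proof
    fix \<alpha> assume a: "\<alpha> \<in> A p"
    have ac: "\<alpha> \<in> carrier BG" using a A_Gam Gam_carrier by blast
    have c: "\<beta>1 \<in> carrier BG" "\<beta>2 \<in> carrier BG" using b1G b2 Gam_carrier by auto
    have "\<alpha> \<otimes>\<^bsub>BG\<^esub> \<beta>1 = \<beta>1 \<otimes>\<^bsub>BG\<^esub> \<alpha>" using A_comm[OF p q(1) _ a b1(1)] q by simp
    then have "\<alpha> \<otimes>\<^bsub>BG\<^esub> (\<beta>1 \<otimes>\<^bsub>BG\<^esub> \<beta>2) = \<beta>1 \<otimes>\<^bsub>BG\<^esub> (\<alpha> \<otimes>\<^bsub>BG\<^esub> \<beta>2)"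
      using ac c by (simp add: B.m_assoc[symmetric])
    also have "\<dots> = (\<beta>1 \<otimes>\<^bsub>BG\<^esub> \<beta>2) \<otimes>\<^bsub>BG\<^esub> \<alpha>" using b2(3) a ac c by (simp add: B.m_assoc)
    finally show "\<alpha> \<otimes>\<^bsub>BG\<^esub> (\<beta>1 \<otimes>\<^bsub>BG\<^esub> \<beta>2) = (\<beta>1 \<otimes>\<^bsub>BG\<^esub> \<beta>2) \<otimes>\<^bsub>BG\<^esub> \<alpha>" .
  qed
  moreover have "\<beta>1 \<otimes>\<^bsub>BG\<^esub> \<beta>2 \<in> Gam" using Gam_mult b1G b2 by blast
  ultimately show ?case by blast
qed

lemma A_sub_LamSyl:
  assumes p: "p \<in> PF" and conn: "\<forall>q\<in>PF. quandle_connected (Syl q) qo"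
  shows "A p \<subseteq> generate BG (Lam ` Syl p)"
proof -
  have LS: "Lam ` Syl p \<subseteq> carrier BG" using Lam_carrier Syl_carrier[OF p] by blast
  have "Dset p \<subseteq> generate BG (Lam ` Syl p)"
  proof
    fix d assume "d \<in> Dset p"
    then obtain x y where d: "d = D x y" "x \<in> carrier G" "y \<in> carrier G" "inv x \<otimes> y \<in> Syl p"
      by (auto simp: Dset_def)
    obtain h where h: "h \<in> Brem p" "h \<otimes> x = prj p x" using pi_shift[OF p d(2)] by blast
    have hc: "h \<in> carrier G" using Brem_carrier[OF h(1)] .
    obtain \<beta> where b: "\<beta> \<in> Gam" "istr \<beta> h" "\<forall>\<alpha>\<in>A p. \<alpha> \<otimes>\<^bsub>BG\<^esub> \<beta> = \<beta> \<otimes>\<^bsub>BG\<^esub> \<alpha>"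
      using BL_beta[OF p conn, of "remove1 p PFL" h] h rem_set by (auto simp: Brem_def)
    have dA: "D x y \<in> A p" unfolding A_def Dset_def using d by (intro generate.incl) blast
    have bc: "\<beta> \<in> carrier BG" using b Gam_carrier by blast
    have dc: "D x y \<in> carrier BG" using D_carrier d by blast
    have cm: "\<beta> \<otimes>\<^bsub>BG\<^esub> D x y = D x y \<otimes>\<^bsub>BG\<^esub> \<beta>" using b(3) dA by simp
    have "\<beta> \<otimes>\<^bsub>BG\<^esub> D x y \<otimes>\<^bsub>BG\<^esub> inv\<^bsub>BG\<^esub> \<beta> = D x y"
      unfolding cm using bc dc by (simp add: B.m_assoc)
    then have e: "D x y = D (h \<otimes> x) (h \<otimes> y)"
      using conj_D[OF Gam_good[OF b(1)] d(2,3)] b(2) d by (simp add: istr_def)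
    have a1: "h \<otimes> x \<in> Syl p" using h(2) pi_carrier[OF p d(2)] by simp
    have "h \<otimes> y = (h \<otimes> x) \<otimes> (inv x \<otimes> y)" using hc d by (simp add: m_assoc)
    then have a2: "h \<otimes> y \<in> Syl p" using subgroup.m_closed[OF Syl_sub[OF p] a1 d(4)] by simp
    have "D (h \<otimes> x) (h \<otimes> y) \<in> generate BG (Lam ` Syl p)"
      unfolding D_def using a1 a2 by (intro generate.eng generate.incl generate.inv) auto
    then show "d \<in> generate BG (Lam ` Syl p)" using e d by simp
  qed
  then show ?thesis unfolding A_def using B.generate_subgroup_incl[OF _ B.generate_is_subgroup[OF LS]] by blast
qed

lemma triv_restrict:
  assumes p: "p \<in> PF"
    and gb: "\<forall>x\<in>Syl p. bij_betw (\<gamma> x) S S"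
    and ge: "\<forall>x\<in>Syl p. \<forall>y\<in>Syl p. \<forall>s\<in>S. th x y s = \<gamma> (qo x y) (inv_into S (\<gamma> y) s)"
    and W: "W \<in> generate BG (Lam ` Syl p)"
  shows "\<forall>z\<in>Syl p. \<forall>t\<in>S. base W z \<in> Syl p \<and> W (z, t) = (base W z, \<gamma> (base W z) (inv_into S (\<gamma> z) t))"
proof -
  have Sc: "\<And>z. z \<in> Syl p \<Longrightarrow> z \<in> carrier G" using Syl_carrier[OF p] .
  have gi: "\<And>z t. z \<in> Syl p \<Longrightarrow> t \<in> S \<Longrightarrow> \<gamma> z (inv_into S (\<gamma> z) t) = t"
    using gb by (simp add: bij_betw_def f_inv_into_f)
  have ig: "\<And>z t. z \<in> Syl p \<Longrightarrow> t \<in> S \<Longrightarrow> inv_into S (\<gamma> z) (\<gamma> z t) = t"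
    using gb by (simp add: bij_betw_def inv_into_f_f)
  have giS: "\<And>z t. z \<in> Syl p \<Longrightarrow> t \<in> S \<Longrightarrow> inv_into S (\<gamma> z) t \<in> S"
    using gb by (metis bij_betw_def inv_into_into)
  have gS: "\<And>z t. z \<in> Syl p \<Longrightarrow> t \<in> S \<Longrightarrow> \<gamma> z t \<in> S"
    using gb bij_betwE by blast
  have q: "quandle (Syl p) qo" using quandle_Syl[OF p] .
  have sub: "generate BG (Lam ` Syl p) \<subseteq> Gam" unfolding Gam_def using Sc by (intro B.mono_generate) auto
  from W show ?thesis
  proof (induct W rule: generate.induct)
    case one then show ?case using base_one Sc BG_one_app gi by simp
  next
    case (incl h)
    then obtain a where a: "a \<in> Syl p" "h = Lam a" by blast
    show ?case
    proof (intro ballI conjI)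
      fix z t assume z: "z \<in> Syl p" and t: "t \<in> S"
      show "base h z \<in> Syl p" using a z q base_Lam Sc by (simp add: quandle_def)
      show "h (z, t) = (base h z, \<gamma> (base h z) (inv_into S (\<gamma> z) t))"
        using a z t ge Lam_app base_Lam Sc by simp
    qed
  next
    case (inv h)
    then obtain a where a: "a \<in> Syl p" "h = Lam a" by blast
    have ac: "a \<in> carrier G" using Sc a by blast
    show ?case
    proof (intro ballI conjI)
      fix z t assume z: "z \<in> Syl p" and t: "t \<in> S"
      define w where "w = Li a z"
      have wS: "w \<in> Syl p"
      proof -
        have "inv a \<otimes> z \<in> Syl p" using subgroup.m_closed[OF Syl_sub[OF p] subgroup.m_inv_closed[OF Syl_sub[OF p] a(1)] z] .
        then have "finv (inv a \<otimes> z) \<in> Syl p" using finv_Syl'[OF p] by blast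
        then show ?thesis unfolding w_def Li_def using subgroup.m_closed[OF Syl_sub[OF p] a(1)] by blast
      qed
      have bw: "base (inv\<^bsub>BG\<^esub> h) z = w" using base_Laminv ac Sc z a w_def by simp
      show "base (inv\<^bsub>BG\<^esub> h) z \<in> Syl p" using bw wS by simp
      have qw: "qo a w = z" unfolding w_def using qo_Li ac Sc z by blast
      let ?v = "\<gamma> w (inv_into S (\<gamma> z) t)"
      have vS: "?v \<in> S" using gS giS wS z t by blast
      have "Lam a (w, ?v) = (z, t)"
        using Lam_app[OF Sc[OF wS] vS] ge a(1) wS vS qw ig[OF wS] giS[OF z t] gi[OF z t] by simp
      then have "(inv\<^bsub>BG\<^esub> (Lam a)) (z, t) = (w, ?v)"
        using BG_inv_app[OF Lam_Bij[OF ac]] Sc wS vS by simp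
      then show "(inv\<^bsub>BG\<^esub> h) (z, t) = (base (inv\<^bsub>BG\<^esub> h) z, \<gamma> (base (inv\<^bsub>BG\<^esub> h) z) (inv_into S (\<gamma> z) t))"
        using bw a by simp
    qed
  next
    case (eng h1 h2)
    have g: "good h1" "good h2" using eng sub Gam_good by auto
    show ?case
    proof (intro ballI conjI)
      fix z t assume z: "z \<in> Syl p" and t: "t \<in> S"
      have zc: "z \<in> carrier G" using Sc z .
      have b: "base (h1 \<otimes>\<^bsub>BG\<^esub> h2) z = base h1 (base h2 z)" using good_mult(2)[OF g zc] .
      have b2: "base h2 z \<in> Syl p" using bspec[OF bspec[OF eng(4) z] t] by blast
      have "base h1 (base h2 z) \<in> Syl p" using bspec[OF bspec[OF eng(2) b2] t] by blast
      then show "base (h1 \<otimes>\<^bsub>BG\<^esub> h2) z \<in> Syl p" using b by simp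
      have "(h1 \<otimes>\<^bsub>BG\<^esub> h2) (z, t) = h1 (h2 (z, t))"
        using BG_mult_app good_Bij g zc t by simp
      also have "h2 (z, t) = (base h2 z, \<gamma> (base h2 z) (inv_into S (\<gamma> z) t))" using eng z t by blast
      also have "h1 \<dots> = (base h1 (base h2 z), \<gamma> (base h1 (base h2 z)) (inv_into S (\<gamma> z) t))"
        using conjunct2[OF bspec[OF bspec[OF eng(2) b2] gS[OF b2 giS[OF z t]]]] ig[OF b2 giS[OF z t]] by simp
      finally show "(h1 \<otimes>\<^bsub>BG\<^esub> h2) (z, t) = (base (h1 \<otimes>\<^bsub>BG\<^esub> h2) z, \<gamma> (base (h1 \<otimes>\<^bsub>BG\<^esub> h2) z) (inv_into S (\<gamma> z) t))"
        using b by simp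
    qed
  qed
qed

lemma row_move:
  assumes p: "p \<in> PF" and conn: "\<forall>q\<in>PF. quandle_connected (Syl q) qo"
    and tr: "cohomologous_trivial (Syl p) qo S th"
    and a: "\<alpha> \<in> A p" and b: "base \<alpha> \<one> = \<one>" and t: "t \<in> S"
  shows "\<alpha> (\<one>, t) = (\<one>, t)"
proof -
  obtain \<gamma> where gb: "\<forall>x\<in>Syl p. bij_betw (\<gamma> x) S S"
    and ge: "\<forall>x\<in>Syl p. \<forall>y\<in>Syl p. \<forall>s\<in>S. th x y s = \<gamma> (qo x y) (inv_into S (\<gamma> y) s)"
    using tr by (auto simp: cohomologous_trivial_def)
  have one: "\<one> \<in> Syl p" using subgroup.one_closed[OF Syl_sub[OF p]] .
  have "\<alpha> \<in> generate BG (Lam ` Syl p)" using A_sub_LamSyl[OF p conn] a by blast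
  then have "\<alpha> (\<one>, t) = (base \<alpha> \<one>, \<gamma> (base \<alpha> \<one>) (inv_into S (\<gamma> \<one>) t))"
    using conjunct2[OF bspec[OF bspec[OF triv_restrict[OF p gb ge] one] t]] by blast
  then have "\<alpha> (\<one>, t) = (\<one>, \<gamma> \<one> (inv_into S (\<gamma> \<one>) t))" using b by simp
  then show ?thesis using gb one t by (simp add: bij_betw_def f_inv_into_f)
qed

end


context cocyc begin

definition "Ys qs = {Lam \<one>} \<union> (\<Union>q\<in>set qs. A q)"
definition "M qs = generate BG (Ys qs)"

lemma Ys_Gam: "Ys qs \<subseteq> Gam"
  unfolding Ys_def using A_Gam Gam_def generate.incl[of "Lam \<one>" "Lam ` carrier G" BG] by blast

lemma Ys_carrier: "Ys qs \<subseteq> carrier BG" using Ys_Gam Gam_carrier by blast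

lemma M_Gam: "M qs \<subseteq> Gam" unfolding M_def using B.generate_subgroup_incl[OF Ys_Gam Gam_sub] .

lemma M_sub: "subgroup (M qs) BG" unfolding M_def using B.generate_is_subgroup[OF Ys_carrier] .

lemma prj_one: "p \<in> PF \<Longrightarrow> prj p \<one> = \<one>" using pi_id subgroup.one_closed[OF Syl_sub] by blast

lemma ker_A:
  assumes p: "p \<in> PF" and q: "q \<in> PF" "q \<noteq> p" and h: "h \<in> A q"
    and z: "z \<in> carrier G" "prj p z = \<one>"
  shows "prj p (base h z) = \<one>"
proof -
  obtain c where c: "c \<in> Syl q" "istr h c" using A_tr[OF q(1) h] by blast
  have cc: "c \<in> carrier G" using Syl_carrier[OF q(1) c(1)] .
  have "prj p (base h z) = prj p c \<otimes> prj p z" using c(2) z pi_mult[OF p cc z(1)] by (simp add: istr_def)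
  then show ?thesis using pi_other[OF p q c(1)] z(2) by simp
qed

lemma ker_inv:
  assumes p: "p \<in> PF" and qs: "set qs \<subseteq> PF" "p \<notin> set qs" and \<psi>: "\<psi> \<in> M qs"
  shows "\<forall>z\<in>carrier G. prj p z = \<one> \<longrightarrow> prj p (base \<psi> z) = \<one>"
  using \<psi> unfolding M_def
proof (induct \<psi> rule: generate.induct)
  case one then show ?case using base_one by simp
next
  case (incl h)
  show ?case
  proof (intro ballI impI)
    fix z assume z: "z \<in> carrier G" "prj p z = \<one>"
    show "prj p (base h z) = \<one>"
    proof (cases "h = Lam \<one>")
      case True
      then have "base h z = f z" using base_Lam qo_one z by simp
      then show ?thesis using pi_f[OF z(1)] z f_one by simp
    next
      case False
      then obtain q where "q \<in> set qs" "h \<in> A q" using incl by (auto simp: Ys_def)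
      then show ?thesis using ker_A[OF p _ _ _ z] qs by auto
    qed
  qed
next
  case (inv h)
  show ?case
  proof (intro ballI impI)
    fix z assume z: "z \<in> carrier G" "prj p z = \<one>"
    show "prj p (base (inv\<^bsub>BG\<^esub> h) z) = \<one>"
    proof (cases "h = Lam \<one>")
      case True
      then have b: "base (inv\<^bsub>BG\<^esub> h) z = finv z" using base_Laminv Li_one z by simp
      have fc: "finv z \<in> carrier G" using finv_carrier z by blast
      have "f (prj p (finv z)) = f \<one>" using pi_f[OF fc] f_finv z f_one by simp
      then show ?thesis using b f_inj[OF prj_cc[OF p fc]] by simp
    next
      case False
      then obtain q where q: "q \<in> set qs" "h \<in> A q" using inv by (auto simp: Ys_def)
      then have "inv\<^bsub>BG\<^esub> h \<in> A q" using subgroup.m_inv_closed[OF A_sub] by blast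
      then show ?thesis using ker_A[OF p _ _ _ z] qs q by auto
    qed
  qed
next
  case (eng h1 h2)
  have "h1 \<in> Gam" "h2 \<in> Gam" using eng(1,3) M_Gam[of qs] unfolding M_def by auto
  then have g: "good h1" "good h2" using Gam_good by auto
  show ?case
  proof (intro ballI impI)
    fix z assume z: "z \<in> carrier G" "prj p z = \<one>"
    have "base h2 z \<in> carrier G" using base_carrier good_Bij g z by blast
    moreover have "prj p (base h2 z) = \<one>" using eng z by blast
    ultimately have "prj p (base h1 (base h2 z)) = \<one>" using eng by blast
    then show "prj p (base (h1 \<otimes>\<^bsub>BG\<^esub> h2) z) = \<one>" using good_mult(2)[OF g z(1)] by simp
  qed
qed

lemma claim:
  assumes conn: "\<forall>q\<in>PF. quandle_connected (Syl q) qo"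
    and tr: "\<forall>q\<in>PF. cohomologous_trivial (Syl q) qo S th"
  shows "distinct qs \<Longrightarrow> set qs \<subseteq> PF \<Longrightarrow> \<phi> \<in> M qs \<Longrightarrow> base \<phi> \<one> = \<one> \<Longrightarrow> t \<in> S \<Longrightarrow> \<phi> (\<one>, t) = (\<one>, t)"
proof (induct qs arbitrary: \<phi>)
  case Nil
  have "M [] = L1" by (simp add: M_def L1_def Ys_def)
  then show ?case using L1_fix Nil by simp
next
  case (Cons p qs)
  have p: "p \<in> PF" and pn: "p \<notin> set qs" and qs: "set qs \<subseteq> PF" "distinct qs" using Cons.prems by auto
  have Yeq: "Ys (p # qs) = A p \<union> Ys qs" by (auto simp: Ys_def)
  have nm: "\<forall>y\<in>Ys qs. \<forall>h\<in>A p. y \<otimes>\<^bsub>BG\<^esub> h \<otimes>\<^bsub>BG\<^esub> inv\<^bsub>BG\<^esub> y \<in> A p \<and> inv\<^bsub>BG\<^esub> y \<otimes>\<^bsub>BG\<^esub> h \<otimes>\<^bsub>BG\<^esub> y \<in> A p"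
  proof (intro ballI)
    fix y h assume y: "y \<in> Ys qs" and h: "h \<in> A p"
    show "y \<otimes>\<^bsub>BG\<^esub> h \<otimes>\<^bsub>BG\<^esub> inv\<^bsub>BG\<^esub> y \<in> A p \<and> inv\<^bsub>BG\<^esub> y \<otimes>\<^bsub>BG\<^esub> h \<otimes>\<^bsub>BG\<^esub> y \<in> A p"
    proof (cases "y = Lam \<one>")
      case True then show ?thesis using A_norm[OF p h] by simp
    next
      case False
      then obtain q where q: "q \<in> set qs" "y \<in> A q" using y by (auto simp: Ys_def)
      have qp: "q \<in> PF" "q \<noteq> p" using q qs pn by auto
      have cm: "h \<otimes>\<^bsub>BG\<^esub> y = y \<otimes>\<^bsub>BG\<^esub> h" using A_comm[OF p qp(1) _ h q(2)] qp by simp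
      have yc: "y \<in> carrier BG" and hc: "h \<in> carrier BG" using q h A_Gam Gam_carrier by auto
      have "y \<otimes>\<^bsub>BG\<^esub> h \<otimes>\<^bsub>BG\<^esub> inv\<^bsub>BG\<^esub> y = h" using cm[symmetric] yc hc by (simp add: B.m_assoc)
      moreover have "inv\<^bsub>BG\<^esub> y \<otimes>\<^bsub>BG\<^esub> h \<otimes>\<^bsub>BG\<^esub> y = h" using cm yc hc by (simp add: B.m_assoc)
      ultimately show ?thesis using h by simp
    qed
  qed
  obtain \<alpha> \<psi> where d: "\<alpha> \<in> A p" "\<psi> \<in> M qs" "\<phi> = \<alpha> \<otimes>\<^bsub>BG\<^esub> \<psi>"
    using B.pd_lemma[OF A_sub Ys_carrier nm] Cons.prems(3) unfolding M_def Yeq by blast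
  obtain c where c: "c \<in> Syl p" "istr \<alpha> c" using A_tr[OF p d(1)] by blast
  have cc: "c \<in> carrier G" using Syl_carrier[OF p c(1)] .
  have "\<alpha> \<in> Gam" "\<psi> \<in> Gam" using d(1,2) A_Gam[of p] M_Gam[of qs] by auto
  then have g: "good \<alpha>" "good \<psi>" using Gam_good by auto
  define w where "w = base \<psi> \<one>"
  have wc: "w \<in> carrier G" unfolding w_def using base_carrier good_Bij g by blast
  have pw: "prj p w = \<one>" unfolding w_def using ker_inv[OF p qs(1) pn d(2)] prj_one[OF p] by simp
  have "c \<otimes> w = \<one>" using Cons.prems(4) d(3) good_mult(2)[OF g] c(2) wc w_def by (simp add: istr_def)
  then have "w = inv c" using cc wc by (metis inv_equality inv_inv inv_closed)
  then have "w \<in> Syl p" using subgroup.m_inv_closed[OF Syl_sub[OF p] c(1)] by simp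
  then have w1: "w = \<one>" using pi_id[OF p] pw by simp
  then have c1: "c = \<one>" using \<open>c \<otimes> w = \<one>\<close> cc by simp
  have bpsi: "base \<psi> \<one> = \<one>" using w1 w_def by simp
  have t: "t \<in> S" using Cons.prems(5) .
  have ps: "\<psi> (\<one>, t) = (\<one>, t)" using Cons.hyps[OF qs(2) qs(1) d(2) bpsi t] .
  have ba: "base \<alpha> \<one> = \<one>" using c(2) c1 by (simp add: istr_def)
  have trp: "cohomologous_trivial (Syl p) qo S th" using tr p by blast
  have al: "\<alpha> (\<one>, t) = (\<one>, t)" using row_move[OF p conn trp d(1) ba t] .
  have "\<phi> (\<one>, t) = \<alpha> (\<psi> (\<one>, t))" using d(3) BG_mult_app good_Bij g t by simp
  then show ?case using ps al by simp
qed

lemma D_trans: "a \<in> carrier G \<Longrightarrow> b \<in> carrier G \<Longrightarrow> c \<in> carrier G \<Longrightarrow> D a b \<otimes>\<^bsub>BG\<^esub> D b c = D a c"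
  unfolding D_def using Lam_carrier by (simp add: B.m_assoc)

lemma D_BL: "set qs \<subseteq> PF \<Longrightarrow> h \<in> BL qs \<Longrightarrow> D h \<one> \<in> M qs"
proof (induct qs arbitrary: h)
  case Nil
  then have "D h \<one> = \<one>\<^bsub>BG\<^esub>" using Lam_carrier by (simp add: D_def)
  then show ?case by (simp add: M_def generate.one)
next
  case (Cons q qs)
  then obtain s h' where sh: "h = s \<otimes> h'" "s \<in> Syl q" "h' \<in> BL qs" by auto
  have q: "q \<in> PF" using Cons.prems by simp
  have sc: "s \<in> carrier G" using Syl_carrier[OF q sh(2)] .
  have hc: "h' \<in> carrier G" using BL_carrier[OF _ sh(3)] Cons.prems by simp
  have "inv h' \<otimes> inv s \<otimes> h' \<in> Syl q"
    using normal.inv_op_closed1[OF Syl_normal[OF q] hc subgroup.m_inv_closed[OF Syl_sub[OF q] sh(2)]] .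
  moreover have "inv h \<otimes> h' = inv h' \<otimes> inv s \<otimes> h'" using sh sc hc by (simp add: inv_mult_group)
  ultimately have "D h h' \<in> Dset q" unfolding Dset_def using sh sc hc by force
  then have "D h h' \<in> A q" unfolding A_def by (rule generate.incl)
  then have d1: "D h h' \<in> M (q # qs)" unfolding M_def Ys_def by (intro generate.incl) auto
  have "D h' \<one> \<in> M qs" using Cons sh by simp
  moreover have "M qs \<subseteq> M (q # qs)" unfolding M_def Ys_def by (intro B.mono_generate) auto
  ultimately have d2: "D h' \<one> \<in> M (q # qs)" by blast
  have "D h \<one> = D h h' \<otimes>\<^bsub>BG\<^esub> D h' \<one>" using D_trans sh sc hc by simp
  then show ?case using d1 d2 generate.eng unfolding M_def by metis
qed

lemma Gam_M: "Gam \<subseteq> M PFL"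
proof -
  have "Lam ` carrier G \<subseteq> M PFL"
  proof
    fix l assume "l \<in> Lam ` carrier G"
    then obtain x where x: "x \<in> carrier G" "l = Lam x" by blast
    have "D x \<one> \<in> M PFL" using D_BL[OF _ all_in_BL[OF x(1)]] PFL_set by simp
    moreover have "Lam \<one> \<in> M PFL" unfolding M_def Ys_def by (intro generate.incl) simp
    ultimately have "D x \<one> \<otimes>\<^bsub>BG\<^esub> Lam \<one> \<in> M PFL" using subgroup.m_closed[OF M_sub] by blast
    moreover have "D x \<one> \<otimes>\<^bsub>BG\<^esub> Lam \<one> = Lam x" unfolding D_def using Lam_carrier x by (simp add: B.m_assoc)
    ultimately show "l \<in> M PFL" using x by simp
  qed
  then show ?thesis unfolding Gam_def using B.generate_subgroup_incl[OF _ M_sub] by blast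
qed

end


context cocyc begin

lemma fix_all:
  assumes conn: "\<forall>q\<in>PF. quandle_connected (Syl q) qo"
    and tr: "\<forall>q\<in>PF. cohomologous_trivial (Syl q) qo S th"
    and \<phi>: "\<phi> \<in> Gam" and b: "base \<phi> \<one> = \<one>" and t: "t \<in> S"
  shows "\<phi> (\<one>, t) = (\<one>, t)"
  using claim[OF conn tr PFL_dist _ _ b t] PFL_set Gam_M \<phi> by blast

lemma cocyc_trivial:
  assumes conn: "\<forall>q\<in>PF. quandle_connected (Syl q) qo"
    and tr: "\<forall>q\<in>PF. cohomologous_trivial (Syl q) qo S th"
    and connG: "quandle_connected (carrier G) qo"
  shows "cohomologous_trivial (carrier G) qo S th"
proof -
  have ex: "\<exists>W. W \<in> Gam \<and> base W \<one> = y" if y: "y \<in> carrier G" for y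
  proof -
    obtain g where g: "g \<in> inn_gen (carrier G) qo" "g \<one> = y"
      using connG y by (auto simp: quandle_connected_def)
    obtain W where "W \<in> generate BG (Lam ` carrier G)" "base W \<one> = g \<one>"
      using lift[OF subgroup_self _ _ g(1)] f_carrier finv_carrier by blast
    then show ?thesis using g(2) unfolding Gam_def by blast
  qed
  define Wy where "Wy y = (SOME W. W \<in> Gam \<and> base W \<one> = y)" for y
  have Wy: "Wy y \<in> Gam" "base (Wy y) \<one> = y" if "y \<in> carrier G" for y
    using someI_ex[OF ex[OF that]] unfolding Wy_def by auto
  define \<gamma> where "\<gamma> y s = snd (Wy y (\<one>, s))" for y s
  have Wapp: "Wy y (\<one>, s) = (y, \<gamma> y s)" "\<gamma> y s \<in> S" if "y \<in> carrier G" "s \<in> S" for y s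
    using good_app[OF Gam_good[OF Wy(1)[OF that(1)]] one_closed that(2)] Wy(2)[OF that(1)]
    unfolding \<gamma>_def by auto
  have uniq: "W (\<one>, s) = Wy y (\<one>, s)" if W: "W \<in> Gam" "base W \<one> = y" and y: "y \<in> carrier G" and s: "s \<in> S" for W y s
  proof -
    let ?V = "inv\<^bsub>BG\<^esub> (Wy y) \<otimes>\<^bsub>BG\<^esub> W"
    have V: "?V \<in> Gam" using Gam_mult[OF Gam_inv[OF Wy(1)[OF y]] W(1)] .
    have "base ?V \<one> = base (inv\<^bsub>BG\<^esub> (Wy y)) (base W \<one>)"
      using good_mult(2)[OF Gam_good[OF Gam_inv[OF Wy(1)[OF y]]] Gam_good[OF W(1)]] by simp
    also have "\<dots> = \<one>" using W(2) base_inv(1)[OF Wy(1)[OF y] one_closed] Wy(2)[OF y] by simp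
    finally have "?V (\<one>, s) = (\<one>, s)" using fix_all[OF conn tr V _ s] by simp
    moreover have "Wy y \<otimes>\<^bsub>BG\<^esub> ?V = W"
      using Gam_carrier W(1) Wy(1)[OF y] by (simp add: B.m_assoc[symmetric])
    moreover have "(Wy y \<otimes>\<^bsub>BG\<^esub> ?V) (\<one>, s) = Wy y (?V (\<one>, s))"
      using BG_mult_app good_Bij Gam_good Wy(1)[OF y] V s by simp
    ultimately show ?thesis by simp
  qed
  have gb: "bij_betw (\<gamma> y) S S" if y: "y \<in> carrier G" for y
  proof (rule bij_betw_imageI)
    have WB: "Wy y \<in> Bij E" using good_Bij Gam_good Wy(1)[OF y] by blast
    show "inj_on (\<gamma> y) S"
    proof (rule inj_onI)
      fix s s' assume s: "s \<in> S" "s' \<in> S" "\<gamma> y s = \<gamma> y s'"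
      then have "Wy y (\<one>, s) = Wy y (\<one>, s')" using Wapp y by simp
      then show "s = s'" using WB s by (auto simp: Bij_def bij_betw_def inj_on_def)
    qed
    show "\<gamma> y ` S = S"
    proof
      show "\<gamma> y ` S \<subseteq> S" using Wapp y by blast
      show "S \<subseteq> \<gamma> y ` S"
      proof
        fix t assume t: "t \<in> S"
        have "(y, t) \<in> Wy y ` E" using WB y t by (auto simp: Bij_def bij_betw_def)
        then obtain z s where zs: "z \<in> carrier G" "s \<in> S" "Wy y (z, s) = (y, t)" by auto
        have "base (Wy y) z = y" using good_app(1)[OF Gam_good[OF Wy(1)[OF y]] zs(1,2)] zs(3) by simp
        then have "z = \<one>" using base_inv(1)[OF Wy(1)[OF y] zs(1)] base_inv(1)[OF Wy(1)[OF y] one_closed]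
          Wy(2)[OF y] by simp
        then have "\<gamma> y s = t" using zs Wapp y by simp
        then show "t \<in> \<gamma> y ` S" using zs by blast
      qed
    qed
  qed
  have ge: "th x y s = \<gamma> (qo x y) (inv_into S (\<gamma> y) s)"
    if x: "x \<in> carrier G" and y: "y \<in> carrier G" and s: "s \<in> S" for x y s
  proof -
    define s' where "s' = inv_into S (\<gamma> y) s"
    have s'1: "s' \<in> S" unfolding s'_def using gb[OF y] s by (metis bij_betw_def inv_into_into)
    have s'2: "\<gamma> y s' = s" unfolding s'_def using gb[OF y] s by (simp add: bij_betw_def f_inv_into_f)
    note s' = s'1 s'2
    let ?W = "Lam x \<otimes>\<^bsub>BG\<^esub> Wy y"
    have "Lam x \<in> Gam" unfolding Gam_def using x by (intro generate.incl) simp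
    then have W: "?W \<in> Gam" using Gam_mult[OF _ Wy(1)[OF y]] by blast
    have bW: "base ?W \<one> = qo x y"
      using good_mult(2)[OF good_Lam[OF x] Gam_good[OF Wy(1)[OF y]] one_closed] Wy(2)[OF y] base_Lam x y by simp
    have "?W (\<one>, s') = Lam x (Wy y (\<one>, s'))"
      using BG_mult_app Lam_Bij[OF x] good_Bij[OF Gam_good[OF Wy(1)[OF y]]] s' by simp
    also have "\<dots> = (qo x y, th x y s)" using Wapp[OF y s'(1)] s' Lam_app y by simp
    finally have "Wy (qo x y) (\<one>, s') = (qo x y, th x y s)"
      using uniq[OF W bW qo_carrier[OF x y] s'(1)] by simp
    then show ?thesis using Wapp[OF qo_carrier[OF x y] s'(1)] s'_def by simp
  qed
  show ?thesis unfolding cohomologous_trivial_def using gb ge by blast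
qed

end


context nilp begin

lemma Syl_one: "p \<in> PF \<Longrightarrow> \<one> \<in> Syl p" using subgroup.one_closed[OF Syl_sub] .

lemma proj_inn:
  assumes p: "p \<in> PF" and g: "g \<in> inn_gen (carrier G) qo"
  shows "(\<forall>w\<in>carrier G. g w \<in> carrier G) \<and> (\<exists>g'\<in>inn_gen (Syl p) qo. \<forall>w\<in>carrier G. prj p (g w) = g' (prj p w))"
  using g
proof (induct g rule: inn_gen.induct)
  case id_in
  have "\<forall>w\<in>carrier G. prj p (id w) = id (prj p w)" by simp
  then show ?case using inn_gen.id_in[of "Syl p" qo] by (intro conjI bexI[of _ id]) auto
next
  case (L_in g x)
  then obtain g' where g': "g' \<in> inn_gen (Syl p) qo" "\<forall>w\<in>carrier G. prj p (g w) = g' (prj p w)" by blast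
  have px: "prj p x \<in> Syl p" using pi_carrier[OF p L_in(3)] .
  have "qo (prj p x) \<circ> g' \<in> inn_gen (Syl p) qo" using inn_gen.L_in[OF g'(1) px] .
  moreover have "\<forall>w\<in>carrier G. prj p ((qo x \<circ> g) w) = (qo (prj p x) \<circ> g') (prj p w)"
    using prj_qo[OF p L_in(3)] L_in g'(2) by simp
  moreover have "\<forall>w\<in>carrier G. (qo x \<circ> g) w \<in> carrier G" using L_in qo_carrier by simp
  ultimately show ?case by blast
next
  case (Linv_in g x)
  then obtain g' where g': "g' \<in> inn_gen (Syl p) qo" "\<forall>w\<in>carrier G. prj p (g w) = g' (prj p w)" by blast
  have x: "x \<in> carrier G" using Linv_in by simp
  have px: "prj p x \<in> Syl p" using pi_carrier[OF p x] .
  have bx: "bij_betw (qo x) (carrier G) (carrier G)" using quandle_G x by (simp add: quandle_def)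
  have bpx: "bij_betw (qo (prj p x)) (Syl p) (Syl p)" using quandle_Syl[OF p] px by (simp add: quandle_def)
  have key: "prj p (inv_into (carrier G) (qo x) v) = inv_into (Syl p) (qo (prj p x)) (prj p v)"
    "inv_into (carrier G) (qo x) v \<in> carrier G" if v: "v \<in> carrier G" for v
  proof -
    let ?u = "inv_into (carrier G) (qo x) v"
    show uc: "?u \<in> carrier G" using bx v by (metis bij_betw_def inv_into_into)
    have "qo x ?u = v" using bx v by (simp add: bij_betw_def f_inv_into_f)
    then have "qo (prj p x) (prj p ?u) = prj p v" using prj_qo[OF p x uc] by simp
    then show "prj p ?u = inv_into (Syl p) (qo (prj p x)) (prj p v)"
      using bpx pi_carrier[OF p uc] by (metis bij_betw_def inv_into_f_eq)
  qed
  have "inv_into (Syl p) (qo (prj p x)) \<circ> g' \<in> inn_gen (Syl p) qo" using inn_gen.Linv_in[OF g'(1) px] .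
  moreover have "\<forall>w\<in>carrier G. prj p ((inv_into (carrier G) (qo x) \<circ> g) w) = (inv_into (Syl p) (qo (prj p x)) \<circ> g') (prj p w)"
    using key Linv_in g'(2) by simp
  moreover have "\<forall>w\<in>carrier G. (inv_into (carrier G) (qo x) \<circ> g) w \<in> carrier G" using key Linv_in by simp
  ultimately show ?case by blast
qed

lemma conn_Syl:
  assumes p: "p \<in> PF" and c: "quandle_connected (carrier G) qo"
  shows "quandle_connected (Syl p) qo"
  unfolding quandle_connected_def
proof (intro conjI ballI)
  show "quandle (Syl p) qo" using quandle_Syl[OF p] .
  fix y z assume y: "y \<in> Syl p" and z: "z \<in> Syl p"
  have yc: "y \<in> carrier G" and zc: "z \<in> carrier G" using y z Syl_carrier[OF p] by auto
  obtain g where g: "g \<in> inn_gen (carrier G) qo" "g y = z" using c yc zc by (auto simp: quandle_connected_def)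
  obtain g' where g': "g' \<in> inn_gen (Syl p) qo" "\<forall>w\<in>carrier G. prj p (g w) = g' (prj p w)"
    using proj_inn[OF p g(1)] by blast
  have "g' y = z" using g'(2) yc g(2) pi_id[OF p y] pi_id[OF p z] by metis
  then show "\<exists>g\<in>inn_gen (Syl p) qo. g y = z" using g' by blast
qed

lemma coc_restrict:
  assumes p: "p \<in> PF" and c: "quandle_cocycle (carrier G) qo S th"
  shows "quandle_cocycle (Syl p) qo S th"
  using c Syl_carrier[OF p] unfolding quandle_cocycle_def by blast

lemma coc_pull:
  assumes p: "p \<in> PF" and c: "quandle_cocycle (Syl p) qo S th"
  shows "quandle_cocycle (carrier G) qo S (\<lambda>x y. th (prj p x) (prj p y))"
  unfolding quandle_cocycle_def
proof (intro conjI ballI)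
  fix x y assume x: "x \<in> carrier G" and y: "y \<in> carrier G"
  show "bij_betw (th (prj p x) (prj p y)) S S" using c pi_carrier[OF p x] pi_carrier[OF p y]
    by (simp add: quandle_cocycle_def)
  fix z s assume z: "z \<in> carrier G" and s: "s \<in> S"
  show "th (prj p (qo x y)) (prj p (qo x z)) (th (prj p x) (prj p z) s) =
        th (prj p x) (prj p (qo y z)) (th (prj p y) (prj p z) s)"
    using c pi_carrier[OF p x] pi_carrier[OF p y] pi_carrier[OF p z] s prj_qo[OF p] x y z
    by (simp add: quandle_cocycle_def)
next
  fix x s assume x: "x \<in> carrier G" and s: "s \<in> S"
  show "th (prj p x) (prj p x) s = s" using c pi_carrier[OF p x] s by (simp add: quandle_cocycle_def)
qed

lemma sc_down:
  assumes sc: "simply_connected (carrier G) qo TYPE('s)" and p: "p \<in> PF"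
  shows "simply_connected (Syl p) qo TYPE('s)"
  unfolding simply_connected_def
proof (intro conjI allI impI)
  show "quandle_connected (Syl p) qo" using conn_Syl[OF p] sc by (simp add: simply_connected_def)
  fix S :: "'s set" and th assume c: "quandle_cocycle (Syl p) qo S th"
  have "cohomologous_trivial (carrier G) qo S (\<lambda>x y. th (prj p x) (prj p y))"
    using sc coc_pull[OF p c] by (simp add: simply_connected_def)
  then obtain \<gamma> where gb: "\<forall>x\<in>carrier G. bij_betw (\<gamma> x) S S"
    and ge: "\<forall>x\<in>carrier G. \<forall>y\<in>carrier G. \<forall>s\<in>S. th (prj p x) (prj p y) s = \<gamma> (qo x y) (inv_into S (\<gamma> y) s)"
    by (auto simp: cohomologous_trivial_def)
  have "\<forall>x\<in>Syl p. bij_betw (\<gamma> x) S S" using gb Syl_carrier[OF p] by blast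
  moreover have "\<forall>x\<in>Syl p. \<forall>y\<in>Syl p. \<forall>s\<in>S. th x y s = \<gamma> (qo x y) (inv_into S (\<gamma> y) s)"
    using ge Syl_carrier[OF p] pi_id[OF p] by metis
  ultimately show "cohomologous_trivial (Syl p) qo S th" unfolding cohomologous_trivial_def by blast
qed

lemma sc_up:
  assumes sc: "\<forall>p\<in>PF. simply_connected (Syl p) qo TYPE('s)"
    and connG: "quandle_connected (carrier G) qo"
  shows "simply_connected (carrier G) qo TYPE('s)"
  unfolding simply_connected_def
proof (intro conjI allI impI)
  show "quandle_connected (carrier G) qo" using connG .
  fix S :: "'s set" and th assume c: "quandle_cocycle (carrier G) qo S th"
  show "cohomologous_trivial (carrier G) qo S th"
  proof (cases "S = {}")
    case True then show ?thesis by (simp add: cohomologous_trivial_def bij_betw_def)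
  next
    case False
    then obtain s0 where s0: "s0 \<in> S" by blast
    interpret C: cocyc G f S th s0 by unfold_locales (use c s0 in auto)
    have conn: "\<forall>q\<in>PF. quandle_connected (Syl q) qo" using sc by (simp add: simply_connected_def)
    have tr: "\<forall>q\<in>PF. cohomologous_trivial (Syl q) qo S th"
      using sc coc_restrict[OF _ c] by (simp add: simply_connected_def)
    show ?thesis using C.cocyc_trivial[OF conn tr connG] .
  qed
qed

lemma rhs_equiv:
  "(\<forall>(p::nat) P. Factorial_Ring.prime p \<and> p dvd order G \<and> sylow_subgroup G p P \<longrightarrow>
       simply_connected P qo TYPE('s)) \<longleftrightarrow> (\<forall>p\<in>PF. simply_connected (Syl p) qo TYPE('s))"
proof
  assume h: "\<forall>(p::nat) P. Factorial_Ring.prime p \<and> p dvd order G \<and> sylow_subgroup G p P \<longrightarrow>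
       simply_connected P qo TYPE('s)"
  show "\<forall>p\<in>PF. simply_connected (Syl p) qo TYPE('s)"
  proof
    fix p assume p: "p \<in> PF"
    have "p dvd order G" using p by (simp add: PF_def in_prime_factors_iff)
    then show "simply_connected (Syl p) qo TYPE('s)" using h PF_prime[OF p] Syl_sylow[OF p] by blast
  qed
next
  assume h: "\<forall>p\<in>PF. simply_connected (Syl p) qo TYPE('s)"
  show "\<forall>(p::nat) P. Factorial_Ring.prime p \<and> p dvd order G \<and> sylow_subgroup G p P \<longrightarrow>
       simply_connected P qo TYPE('s)"
  proof (intro allI impI)
    fix p :: nat and P assume a: "Factorial_Ring.prime p \<and> p dvd order G \<and> sylow_subgroup G p P"
    then have p: "p \<in> PF" using order_pos by (simp add: PF_def prime_factorsI)
    then have "P = Syl p" using sylow_unique a by blast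
    then show "simply_connected P qo TYPE('s)" using h p by simp
  qed
qed

end

theorem theorem3p13:
  fixes G :: "('a, 'b) monoid_scheme" and f :: "'a \<Rightarrow> 'a"
  assumes "group G" and "finite (carrier G)" and "nilpotent_group G"
    and "f \<in> iso G G"
    and "quandle_connected (carrier G) (qop G f)"
  shows "simply_connected (carrier G) (qop G f) TYPE('s) \<longleftrightarrow>
    (\<forall>(p::nat) P. Factorial_Ring.prime p \<and> p dvd order G \<and> sylow_subgroup G p P \<longrightarrow>
       simply_connected P (qop G f) TYPE('s))"
proof -
  have "nilp G f" unfolding nilp_def nilp_axioms_def using assms by (auto simp: nilpotent_group_def)
  then interpret N: nilp G f .
  show ?thesis unfolding N.rhs_equiv using N.sc_down N.sc_up assms(5) by blast
qed


end
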